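(* The family $\mathcal{L}_0$ contains four chains $\mathcal{K}_0,\mathcal{K}_1,\mathcal{K}_2,\mathcal{K}_3$ (with respect to $\subset$), each of size $\mathfrak{c}$, such that for each $i\in\{0,1,2,3\}$ all spaces $(\mathbb{R},\tau)$ with $\tau\in\mathcal{K}_i$ are pairwise homeomorphic, and: (i) for $\tau\in\mathcal{K}_0$ the space $(\mathbb{R},\tau)$ is second countable but not regular; (ii) for $\tau\in\mathcal{K}_1$ the space $(\mathbb{R},\tau)$ is neither regular nor first countable; (iii) for $\tau\in\mathcal{K}_2$ the space $(\mathbb{R},\tau)$ is completely normal but not first countable; (iv) for $\tau\in\mathcal{K}_3$ the space $(\mathbb{R},\tau)$ is completely metrizable; (v) $\mathcal{K}_0\cup\mathcal{K}_1\cup\mathcal{K}_2$ is a chain and for every $i\in\{0,1,2\}$ the chain $\mathcal{K}_i$ is dense in $\mathcal{K}_0\cup\mathcal{K}_1\cup\mathcal{K}_2$; (vi) every topology in $\mathcal{K}_0\cup\mathcal{K}_1\cup\mathcal{K}_2$ is a subset of every topology in $\mathcal{K}_3$.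
   Context: $\mathfrak{c}=|\mathbb{R}|$. $\eta$ denotes the Euclidean topology on $\mathbb{R}$. $\mathcal{L}$ denotes the family of all Hausdorff topologies $\tau$ on $\mathbb{R}$ with $\tau\subset\eta$. For $\tau\in\mathcal{L}$ and $a\in\mathbb{R}$ let $\mathcal{N}_\tau(a)$ be the neighborhood filter of $a$ in $(\mathbb{R},\tau)$; let $C(\tau)$ be the set of all $a\in\mathbb{R}$ with $\mathcal{N}_\tau(a)\neq\mathcal{N}_\eta(a)$. $\mathcal{L}_0:=\{\tau\in\mathcal{L}\mid C(\tau)\subset\{0\}\}$. A chain is a family of topologies totally ordered by inclusion. If $\mathcal{K}'\subset\mathcal{K}$ are chains, $\mathcal{K}'$ is dense in $\mathcal{K}$ if for every $X,Y\in\mathcal{K}$ with $X\subsetneq Y$ there is $Z\in\mathcal{K}'\setminus\{X,Y\}$ with $X\subset Z\subset Y$. *)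

theory Defs
  imports "HOL-Analysis.Analysis" "HOL-Library.Equipollence"
begin

definition top_le :: "'a topology \<Rightarrow> 'a topology \<Rightarrow> bool" where
  "top_le \<tau> \<sigma> \<longleftrightarrow> (\<forall>U. openin \<tau> U \<longrightarrow> openin \<sigma> U)"

definition L_family :: "real topology set" where
  "L_family = {\<tau>. topspace \<tau> = UNIV \<and> Hausdorff_space \<tau> \<and> top_le \<tau> euclideanreal}"

definition nbhds :: "'a topology \<Rightarrow> 'a \<Rightarrow> 'a set set" where
  "nbhds \<tau> a = {N. \<exists>U. openin \<tau> U \<and> a \<in> U \<and> U \<subseteq> N}"

definition C_set :: "real topology \<Rightarrow> real set" where
  "C_set \<tau> = {a. nbhds \<tau> a \<noteq> nbhds euclideanreal a}"

definition L0_family :: "real topology set" where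
  "L0_family = {\<tau> \<in> L_family. C_set \<tau> \<subseteq> {0}}"

definition top_chain :: "'a topology set \<Rightarrow> bool" where
  "top_chain K \<longleftrightarrow> (\<forall>X\<in>K. \<forall>Y\<in>K. top_le X Y \<or> top_le Y X)"

definition top_dense_in :: "'a topology set \<Rightarrow> 'a topology set \<Rightarrow> bool" where
  "top_dense_in K' K \<longleftrightarrow>
     (\<forall>X\<in>K. \<forall>Y\<in>K. top_le X Y \<and> X \<noteq> Y \<longrightarrow>
        (\<exists>Z\<in>K' - {X, Y}. top_le X Z \<and> top_le Z Y))"

end

theory Submission
  imports Defs
begin


definition TRp :: "(real \<Rightarrow> real) \<Rightarrow> real set \<Rightarrow> bool" where
  "TRp \<rho> U \<longleftrightarrow> open U \<and> (0 \<in> U \<longrightarrow> (\<exists>e>0. \<forall>x. \<rho> x < e \<longrightarrow> x \<in> U))"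

lemma istop_TRp: "istopology (TRp \<rho>)"
proof -
  have 1: "TRp \<rho> (S \<inter> T)" if a: "TRp \<rho> S" "TRp \<rho> T" for S T
  proof -
    have "open (S \<inter> T)" using a by (auto simp: TRp_def)
    moreover have "(\<exists>e>0. \<forall>x. \<rho> x < e \<longrightarrow> x \<in> S \<inter> T)" if z: "0 \<in> S \<inter> T"
    proof -
      obtain e1 e2 where "e1>0" "e2>0" "\<forall>x. \<rho> x < e1 \<longrightarrow> x \<in> S" "\<forall>x. \<rho> x < e2 \<longrightarrow> x \<in> T"
        using a z by (auto simp: TRp_def)
      then show ?thesis by (intro exI[of _ "min e1 e2"]) auto
    qed
    ultimately show ?thesis by (auto simp: TRp_def)
  qed
  have 2: "TRp \<rho> (\<Union>K)" if a: "\<forall>S\<in>K. TRp \<rho> S" for K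
    using a unfolding TRp_def by blast
  show ?thesis unfolding istopology_def using 1 2 by blast
qed

definition TR :: "(real \<Rightarrow> real) \<Rightarrow> real topology" where
  "TR \<rho> = topology (TRp \<rho>)"

lemma openin_TR: "openin (TR \<rho>) U \<longleftrightarrow> open U \<and> (0 \<in> U \<longrightarrow> (\<exists>e>0. \<forall>x. \<rho> x < e \<longrightarrow> x \<in> U))"
  unfolding TR_def using istop_TRp by (simp add: TRp_def)

lemma topspace_TR [simp]: "topspace (TR \<rho>) = UNIV"
proof -
  have "openin (TR \<rho>) UNIV" unfolding openin_TR by (auto intro: exI[of _ 1])
  then show ?thesis unfolding topspace_def by auto
qed

lemma openin_TR_no0: "open U \<Longrightarrow> 0 \<notin> U \<Longrightarrow> openin (TR \<rho>) U"
  by (simp add: openin_TR)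

definition lowb :: "(real \<Rightarrow> real) \<Rightarrow> bool" where
  "lowb \<rho> \<longleftrightarrow> (\<forall>a. a \<noteq> 0 \<longrightarrow> (\<exists>d>0. \<exists>c>0. \<forall>x. \<bar>x - a\<bar> < d \<longrightarrow> c \<le> \<rho> x))"

lemma TR_sep0:
  assumes "lowb \<rho>" "a \<noteq> 0"
  obtains e where "e > 0" "e < \<bar>a\<bar>" "openin (TR \<rho>) (- cball a e)"
proof -
  obtain d c where dc: "d>0" "c>0" "\<forall>x. \<bar>x - a\<bar> < d \<longrightarrow> c \<le> \<rho> x"
    using assms unfolding lowb_def by blast
  define e where "e = min (d/2) (\<bar>a\<bar>/2)"
  have e: "e > 0" "e < \<bar>a\<bar>" "e < d" using dc assms by (auto simp: e_def)
  have "openin (TR \<rho>) (- cball a e)"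
    unfolding openin_TR
  proof (intro conjI impI)
    show "open (- cball a e)" by auto
    show "\<exists>e'>0. \<forall>x. \<rho> x < e' \<longrightarrow> x \<in> - cball a e"
    proof (intro exI[of _ c] conjI allI impI)
      fix x assume "\<rho> x < c"
      then have "\<not> \<bar>x - a\<bar> < d" using dc by force
      then show "x \<in> - cball a e" using e by (auto simp: dist_real_def)
    qed (use dc in auto)
  qed
  then show ?thesis using that e by blast
qed

lemma TR_Hausdorff:
  assumes "lowb \<rho>" shows "Hausdorff_space (TR \<rho>)"
  unfolding Hausdorff_space_def
proof (intro allI impI)
  fix x y :: real assume "x \<in> topspace (TR \<rho>) \<and> y \<in> topspace (TR \<rho>) \<and> x \<noteq> y"
  then have xy: "x \<noteq> y" by auto
  have main: "\<exists>U V. openin (TR \<rho>) U \<and> openin (TR \<rho>) V \<and> x \<in> U \<and> y \<in> V \<and> disjnt U V"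
    if xy: "x \<noteq> y" and x0: "x \<noteq> 0" for x y
  proof (cases "y = 0")
    case True
    obtain e where e: "e > 0" "e < \<bar>x\<bar>" "openin (TR \<rho>) (- cball x e)"
      using TR_sep0[OF assms x0] by blast
    show ?thesis
      apply (rule exI[of _ "ball x e"], rule exI[of _ "- cball x e"])
      using e True by (auto intro!: openin_TR_no0 simp: disjnt_def dist_real_def)
  next
    case False
    define e where "e = min (\<bar>x - y\<bar>/2) (min (\<bar>x\<bar>) (\<bar>y\<bar>))"
    have e: "e > 0" using xy x0 False by (auto simp: e_def)
    show ?thesis
      apply (rule exI[of _ "ball x e"], rule exI[of _ "ball y e"])
      using e x0 False by (auto intro!: openin_TR_no0 simp: disjnt_def dist_real_def e_def abs_if split: if_splits)
  qed
  show "\<exists>U V. openin (TR \<rho>) U \<and> openin (TR \<rho>) V \<and> x \<in> U \<and> y \<in> V \<and> disjnt U V"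
  proof (cases "x = 0")
    case True
    then have "y \<noteq> 0" using xy by auto
    then obtain U V where "openin (TR \<rho>) U \<and> openin (TR \<rho>) V \<and> y \<in> U \<and> x \<in> V \<and> disjnt U V"
      using main[of y x] xy by auto
    then show ?thesis by (metis disjnt_sym)
  qed (use main xy in auto)
qed

lemma TR_le_eucl: "top_le (TR \<rho>) euclideanreal"
  by (simp add: top_le_def openin_TR)

lemma TR_L0: assumes "lowb \<rho>" shows "TR \<rho> \<in> L0_family"
  unfolding L0_family_def L_family_def
proof (intro CollectI conjI)
  show "C_set (TR \<rho>) \<subseteq> {0}"
    unfolding C_set_def
  proof
    fix a assume "a \<in> {a. nbhds (TR \<rho>) a \<noteq> nbhds euclideanreal a}"
    then have ne: "nbhds (TR \<rho>) a \<noteq> nbhds euclideanreal a" by auto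
    show "a \<in> {0}"
    proof (rule ccontr)
      assume "a \<notin> {0}"
      then have a0: "a \<noteq> 0" by auto
      have "nbhds (TR \<rho>) a = nbhds euclideanreal a"
      proof (rule set_eqI, rule iffI)
        fix N assume "N \<in> nbhds (TR \<rho>) a"
        then show "N \<in> nbhds euclideanreal a" by (auto simp: nbhds_def openin_TR)
      next
        fix N assume "N \<in> nbhds euclideanreal a"
        then obtain U where U: "open U" "a \<in> U" "U \<subseteq> N" by (auto simp: nbhds_def)
        have "openin (TR \<rho>) (U \<inter> ball a \<bar>a\<bar>)"
          by (rule openin_TR_no0) (use U in \<open>auto simp: dist_real_def\<close>)
        then show "N \<in> nbhds (TR \<rho>) a" unfolding nbhds_def using U a0
          by (intro CollectI exI[of _ "U \<inter> ball a \<bar>a\<bar>"]) auto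
      qed
      then show False using ne by simp
    qed
  qed
qed (use assms TR_Hausdorff TR_le_eucl in auto)



lemma TR_le:
  assumes "\<And>e. e > 0 \<Longrightarrow> \<exists>d>0. \<forall>x. \<rho>1 x < d \<longrightarrow> \<rho>2 x < e"
  shows "top_le (TR \<rho>2) (TR \<rho>1)"
  unfolding top_le_def openin_TR
proof (intro allI impI conjI)
  fix U assume U: "open U \<and> (0 \<in> U \<longrightarrow> (\<exists>e>0. \<forall>x. \<rho>2 x < e \<longrightarrow> x \<in> U))"
  then show "open U" by auto
  assume "0 \<in> U"
  then obtain e where "e>0" "\<forall>x. \<rho>2 x < e \<longrightarrow> x \<in> U" using U by auto
  with assms[of e] show "\<exists>e>0. \<forall>x. \<rho>1 x < e \<longrightarrow> x \<in> U" by blast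
qed

lemma TR_not_le:
  assumes "open U" "0 \<in> U" "e > 0" "\<And>x. \<rho>1 x < e \<Longrightarrow> x \<in> U"
    and "\<And>e. e > 0 \<Longrightarrow> \<exists>x. \<rho>2 x < e \<and> x \<notin> U"
  shows "\<not> top_le (TR \<rho>1) (TR \<rho>2)"
proof
  assume "top_le (TR \<rho>1) (TR \<rho>2)"
  moreover have "openin (TR \<rho>1) U" unfolding openin_TR using assms by blast
  ultimately have "openin (TR \<rho>2) U" by (auto simp: top_le_def)
  then obtain e' where "e' > 0" "\<forall>x. \<rho>2 x < e' \<longrightarrow> x \<in> U" using assms(2) by (auto simp: openin_TR)
  with assms(5)[of e'] show False by blast
qed

lemma smono_cont:
  fixes \<psi> \<phi> :: "real \<Rightarrow> real"
  assumes sm: "strict_mono \<psi>" and inv: "\<And>y. \<psi> (\<phi> y) = y"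
  shows "continuous_on UNIV \<psi>"
proof -
  have "open (\<psi> -` U)" if U: "open U" for U
    unfolding open_dist
  proof (intro ballI)
    fix x assume "x \<in> \<psi> -` U"
    then have "\<psi> x \<in> U" by auto
    then obtain e where e: "e > 0" "\<forall>y. dist y (\<psi> x) < e \<longrightarrow> y \<in> U"
      using U unfolding open_dist by blast
    define a where "a = \<phi> (\<psi> x - e)"
    define b where "b = \<phi> (\<psi> x + e)"
    have "\<psi> a < \<psi> x" "\<psi> x < \<psi> b" using e by (auto simp: a_def b_def inv)
    then have ab: "a < x" "x < b" using sm by (metis not_less_iff_gr_or_eq strict_mono_less)+
    show "\<exists>d>0. \<forall>y. dist y x < d \<longrightarrow> y \<in> \<psi> -` U"
    proof (intro exI[of _ "min (x - a) (b - x)"] conjI allI impI)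
      fix y assume "dist y x < min (x - a) (b - x)"
      then have "a < y" "y < b" by (auto simp: dist_real_def)
      then have "\<psi> a < \<psi> y" "\<psi> y < \<psi> b" using sm by (auto simp: strict_mono_less)
      then have "dist (\<psi> y) (\<psi> x) < e" by (auto simp: a_def b_def inv dist_real_def)
      then show "y \<in> \<psi> -` U" using e by auto
    qed (use ab in auto)
  qed
  then show ?thesis by (simp add: continuous_on_open_vimage)
qed

definition compat :: "(real \<Rightarrow> real) \<Rightarrow> (real \<Rightarrow> real) \<Rightarrow> (real \<Rightarrow> real) \<Rightarrow> bool" where
  "compat \<rho>1 \<rho>2 \<psi> \<longleftrightarrow> (\<forall>e>0. \<exists>d>0. \<forall>x. \<rho>1 x < d \<longrightarrow> \<rho>2 (\<psi> x) < e)"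

lemma TR_cont:
  assumes c: "continuous_on UNIV \<psi>" and z: "\<psi> 0 = 0" and cp: "compat \<rho>1 \<rho>2 \<psi>"
  shows "continuous_map (TR \<rho>1) (TR \<rho>2) \<psi>"
  unfolding continuous_map_def
proof (intro conjI allI impI)
  show "\<psi> \<in> topspace (TR \<rho>1) \<rightarrow> topspace (TR \<rho>2)" by auto
  fix U assume U: "openin (TR \<rho>2) U"
  have eq: "{x \<in> topspace (TR \<rho>1). \<psi> x \<in> U} = \<psi> -` U" by auto
  show "openin (TR \<rho>1) {x \<in> topspace (TR \<rho>1). \<psi> x \<in> U}"
    unfolding eq openin_TR
  proof (intro conjI impI)
    show "open (\<psi> -` U)" using U c by (auto simp: openin_TR continuous_on_open_vimage)
    assume "0 \<in> \<psi> -` U"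
    then have "0 \<in> U" using z by auto
    then obtain e where "e > 0" "\<forall>x. \<rho>2 x < e \<longrightarrow> x \<in> U" using U by (auto simp: openin_TR)
    then show "\<exists>e>0. \<forall>x. \<rho>1 x < e \<longrightarrow> x \<in> \<psi> -` U" using cp unfolding compat_def by fastforce
  qed
qed

lemma TR_homeo:
  fixes \<psi> \<phi> :: "real \<Rightarrow> real"
  assumes "strict_mono \<psi>" "strict_mono \<phi>" "\<And>x. \<phi> (\<psi> x) = x" "\<And>y. \<psi> (\<phi> y) = y"
    "\<psi> 0 = 0" "compat \<rho>1 \<rho>2 \<psi>" "compat \<rho>2 \<rho>1 \<phi>"
  shows "TR \<rho>1 homeomorphic_space TR \<rho>2"
proof -
  have "\<phi> 0 = 0" using assms(3)[of 0] assms(5) by simp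
  then have "homeomorphic_maps (TR \<rho>1) (TR \<rho>2) \<psi> \<phi>"
    unfolding homeomorphic_maps_def using assms
    by (auto intro!: TR_cont smono_cont)
  then show ?thesis unfolding homeomorphic_space_def by blast
qed



definition uoff :: "real \<Rightarrow> real" where "uoff x = x - of_int \<lfloor>x\<rfloor> - 1/2"
definition blk :: "real \<Rightarrow> nat" where "blk x = nat \<lfloor>x\<rfloor>"

lemma uoff_range: "-1/2 \<le> uoff x" "uoff x < 1/2"
  unfolding uoff_def by linarith+

lemma floor_pt:
  assumes "-1/2 \<le> v" "v < 1/2"
  shows "\<lfloor>of_int n + 1/2 + v\<rfloor> = n" "uoff (of_int n + 1/2 + v) = v"
proof -
  show f: "\<lfloor>of_int n + 1/2 + v\<rfloor> = n" using assms by (intro floor_unique) auto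
  show "uoff (of_int n + 1/2 + v) = v" unfolding uoff_def f by simp
qed

lemma x_decomp: "x = of_int \<lfloor>x\<rfloor> + 1/2 + uoff x" by (simp add: uoff_def)

definition gpl :: "real \<Rightarrow> real \<Rightarrow> real \<Rightarrow> real" where
  "gpl a b v = (if v \<le> a then v * b / a else b + (v - a) * (1/2 - b) / (1/2 - a))"

definition fpl :: "real \<Rightarrow> real \<Rightarrow> real \<Rightarrow> real" where
  "fpl a b u = (if u < 0 then - gpl a b (-u) else gpl a b u)"

definition okr :: "real \<Rightarrow> bool" where "okr a \<longleftrightarrow> 0 < a \<and> a < 1/2"

lemma gpl_le_iff:
  assumes "okr a" "okr b" "0 \<le> v" shows "gpl a b v \<le> b \<longleftrightarrow> v \<le> a"
proof -
  have "v * b / a \<le> b \<longleftrightarrow> v \<le> a" if "v \<le> a" using assms that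
    by (auto simp: okr_def divide_le_eq mult.commute mult_left_mono)
  moreover have "\<not> b + (v - a) * (1/2 - b) / (1/2 - a) \<le> b" if "\<not> v \<le> a"
    using assms that by (auto simp: okr_def not_le intro!: divide_pos_pos mult_pos_pos)
  ultimately show ?thesis unfolding gpl_def by auto
qed

lemma gpl_less_iff:
  assumes "okr a" "okr b" "0 \<le> v" shows "gpl a b v < b \<longleftrightarrow> v < a"
proof -
  have "v * b / a < b \<longleftrightarrow> v < a" if "v \<le> a" using assms that
    by (auto simp: okr_def divide_less_eq mult.commute)
  moreover have "\<not> b + (v - a) * (1/2 - b) / (1/2 - a) < b" if "\<not> v \<le> a"
  proof -
    have "0 \<le> (v - a) * (1/2 - b) / (1/2 - a)"
      using assms that by (auto simp: okr_def intro!: divide_nonneg_pos mult_nonneg_nonneg)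
    then show ?thesis by linarith
  qed
  ultimately show ?thesis unfolding gpl_def by auto
qed

lemma gpl_nonneg: assumes "okr a" "okr b" "0 \<le> v" shows "0 \<le> gpl a b v"
  using assms by (auto simp: okr_def gpl_def intro!: add_nonneg_nonneg divide_nonneg_pos mult_nonneg_nonneg)

lemma gpl_pos: assumes "okr a" "okr b" "0 < v" shows "0 < gpl a b v"
  using assms by (auto simp: okr_def gpl_def intro!: add_pos_nonneg divide_nonneg_pos mult_nonneg_nonneg)

lemma gpl_zero [simp]: "okr a \<Longrightarrow> gpl a b 0 = 0" "okr a \<Longrightarrow> gpl a b (1/2) = 1/2"
proof -
  show "okr a \<Longrightarrow> gpl a b 0 = 0" by (simp add: gpl_def okr_def)
  assume "okr a"
  then have "\<not> 1/2 \<le> a" "1/2 - a \<noteq> 0" by (auto simp: okr_def)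
  then show "gpl a b (1/2) = 1/2" by (simp add: gpl_def)
qed

lemma gpl_inv: assumes "okr a" "okr b" "0 \<le> v" shows "gpl b a (gpl a b v) = v"
proof (cases "v \<le> a")
  case True
  then have "gpl a b v \<le> b" using gpl_le_iff assms by blast
  then show ?thesis using True assms by (simp add: gpl_def okr_def)
next
  case False
  then have nb: "\<not> gpl a b v \<le> b" using gpl_le_iff assms by blast
  have ne: "1/2 - a \<noteq> 0" "1/2 - b \<noteq> 0" using assms by (auto simp: okr_def)
  have "gpl b a (gpl a b v) = a + (gpl a b v - b) * (1/2 - a) / (1/2 - b)"
    using nb by (simp add: gpl_def)
  also have "gpl a b v - b = (v - a) * (1/2 - b) / (1/2 - a)" using False by (simp add: gpl_def)
  also have "a + (v - a) * (1/2 - b) / (1/2 - a) * (1/2 - a) / (1/2 - b) = v"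
    using ne by simp
  finally show ?thesis .
qed

lemma gpl_smono: assumes "okr a" "okr b" "0 \<le> v" "v < w" shows "gpl a b v < gpl a b w"
proof -
  have ab: "0 < a" "a < 1/2" "0 < b" "b < 1/2" using assms by (auto simp: okr_def)
  consider "w \<le> a" | "v \<le> a" "\<not> w \<le> a" | "\<not> v \<le> a" using assms by linarith
  then show ?thesis
  proof cases
    case 1 then show ?thesis using ab assms by (auto simp: gpl_def divide_strict_right_mono mult_strict_right_mono)
  next
    case 2
    have "v * b / a \<le> b" using 2 ab by (auto simp: divide_le_eq mult.commute mult_left_mono)
    moreover have "0 < (w - a) * (1/2 - b) / (1/2 - a)" using 2 ab by (auto intro!: divide_pos_pos)
    ultimately show ?thesis using 2 by (auto simp: gpl_def)
  next
    case 3
    have "(v - a) * (1/2 - b) < (w - a) * (1/2 - b)" using 3 ab assms by (auto intro!: mult_strict_right_mono)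
    then show ?thesis using 3 ab assms by (auto simp: gpl_def divide_strict_right_mono)
  qed
qed

lemma gpl_hi: assumes "okr a" "a \<le> x" shows "gpl a b x = b + (x - a) * ((1/2-b)/(1/2-a))"
  using assms by (cases "x = a") (auto simp: gpl_def okr_def)

lemma gpl_lip:
  assumes "okr a" "okr b" "0 \<le> v" "v \<le> w"
  shows "gpl a b w - gpl a b v \<le> max (b/a) ((1/2-b)/(1/2-a)) * (w - v)"
proof -
  have ab: "0 < a" "a < 1/2" "0 < b" "b < 1/2" using assms by (auto simp: okr_def)
  define L where "L = max (b/a) ((1/2-b)/(1/2-a))"
  have L1: "b/a \<le> L" and L2: "(1/2-b)/(1/2-a) \<le> L" by (auto simp: L_def)
  have p1: "gpl a b y - gpl a b x \<le> L * (y - x)" if "0 \<le> x" "x \<le> y" "y \<le> a" for x y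
  proof -
    have "gpl a b y - gpl a b x = y * b / a - x * b / a" using that by (simp add: gpl_def)
    also have "\<dots> = (b/a) * (y - x)" by (simp add: algebra_simps diff_divide_distrib)
    also have "\<dots> \<le> L * (y - x)" using L1 that by (intro mult_right_mono) auto
    finally show ?thesis .
  qed
  have p2: "gpl a b y - gpl a b x \<le> L * (y - x)" if "a \<le> x" "x \<le> y" for x y
  proof -
    have "gpl a b y - gpl a b x = ((1/2-b)/(1/2-a)) * (y - x)"
    proof -
      define k where "k = (1/2-b)/(1/2-a)"
      have "gpl a b y - gpl a b x = (b + (y - a) * k) - (b + (x - a) * k)"
        using that gpl_hi[of a x b] gpl_hi[of a y b] assms by (simp add: k_def)
      also have "\<dots> = k * (y - x)" by (simp add: algebra_simps)
      finally show ?thesis by (simp add: k_def)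
    qed
    also have "\<dots> \<le> L * (y - x)" using L2 that by (intro mult_right_mono) auto
    finally show ?thesis .
  qed
  show ?thesis
  proof (cases "w \<le> a")
    case True then show ?thesis using p1 assms unfolding L_def by blast
  next
    case False
    show ?thesis
    proof (cases "v \<le> a")
      case True
      have "gpl a b w - gpl a b v = (gpl a b w - gpl a b a) + (gpl a b a - gpl a b v)" by simp
      also have "\<dots> \<le> L * (w - a) + L * (a - v)"
        using p1[of v a] p2[of a w] True False assms by (intro add_mono) auto
      also have "\<dots> = L * (w - v)" by (simp add: algebra_simps)
      finally show ?thesis unfolding L_def .
    next
      case False then show ?thesis using p2 assms unfolding L_def by simp
    qed
  qed
qed

lemma fpl_inv: assumes "okr a" "okr b" shows "fpl b a (fpl a b u) = u"
proof (cases "u < 0")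
  case True
  then have "0 < gpl a b (-u)" using gpl_pos assms by auto
  then show ?thesis using True assms gpl_inv[of a b "-u"] by (simp add: fpl_def)
next
  case False
  then have "0 \<le> gpl a b u" using gpl_nonneg assms by auto
  then show ?thesis using False assms gpl_inv[of a b u] by (simp add: fpl_def)
qed

lemma fpl_smono: assumes "okr a" "okr b" "u < w" shows "fpl a b u < fpl a b w"
proof -
  consider "w < 0" | "u < 0" "\<not> w < 0" | "\<not> u < 0" using assms by linarith
  then show ?thesis
  proof cases
    case 1 then show ?thesis using gpl_smono[of a b "-w" "-u"] assms by (auto simp: fpl_def)
  next
    case 2 then show ?thesis using gpl_pos[of a b "-u"] gpl_nonneg[of a b w] assms by (auto simp: fpl_def)
  next
    case 3 then show ?thesis using gpl_smono[of a b u w] assms by (auto simp: fpl_def)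
  qed
qed

lemma fpl_half: assumes "okr a" shows "fpl a b (-1/2) = -1/2" "fpl a b (1/2) = 1/2"
  using assms by (auto simp: fpl_def okr_def gpl_def)

lemma fpl_range:
  assumes "okr a" "okr b" "-1/2 \<le> u" "u < 1/2"
  shows "-1/2 \<le> fpl a b u" "fpl a b u < 1/2"
proof -
  show "-1/2 \<le> fpl a b u"
    using fpl_smono[of a b "-1/2" u] assms fpl_half[of a b] by (cases "u = -1/2") auto
  show "fpl a b u < 1/2"
    using fpl_smono[of a b u "1/2"] assms fpl_half[of a b] by auto
qed

lemma fpl_abs_less: assumes "okr a" "okr b" shows "\<bar>fpl a b u\<bar> < b \<longleftrightarrow> \<bar>u\<bar> < a"
  using assms gpl_less_iff[of a b "\<bar>u\<bar>"] gpl_nonneg[of a b "-u"] gpl_nonneg[of a b u]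
  by (auto simp: fpl_def abs_if)

lemma fpl_abs_le: assumes "okr a" "okr b" shows "\<bar>fpl a b u\<bar> \<le> b \<longleftrightarrow> \<bar>u\<bar> \<le> a"
  using assms gpl_le_iff[of a b "\<bar>u\<bar>"] gpl_nonneg[of a b "-u"] gpl_nonneg[of a b u]
  by (auto simp: fpl_def abs_if)

lemma fpl_less: assumes "okr a" "okr b" shows "fpl a b u < b \<longleftrightarrow> u < a"
  using assms gpl_less_iff[of a b u] gpl_nonneg[of a b "-u"]
  by (auto simp: fpl_def okr_def)

lemma fpl_ge: assumes "okr a" "okr b" shows "-b \<le> fpl a b u \<longleftrightarrow> -a \<le> u"
  using assms gpl_le_iff[of a b "-u"] gpl_nonneg[of a b u]
  by (auto simp: fpl_def okr_def)

lemma fpl_lip: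
  assumes "okr a" "okr b"
  shows "\<bar>fpl a b w - fpl a b v\<bar> \<le> max (b/a) ((1/2-b)/(1/2-a)) * \<bar>w - v\<bar>"
proof -
  define L where "L = max (b/a) ((1/2-b)/(1/2-a))"
  have "0 \<le> b/a" using assms by (auto simp: okr_def)
  then have L0: "0 \<le> L" by (auto simp: L_def)
  have main: "fpl a b w - fpl a b v \<le> L * (w - v)" if "v \<le> w" for v w
  proof -
    consider "w < 0" | "v < 0" "\<not> w < 0" | "\<not> v < 0" using that by linarith
    then show ?thesis
    proof cases
      case 1 then show ?thesis using gpl_lip[of a b "-w" "-v"] assms that by (auto simp: fpl_def L_def)
    next
      case 2
      have "gpl a b w - gpl a b 0 \<le> L * (w - 0)" using gpl_lip[of a b 0 w] assms 2 by (auto simp: L_def)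
      moreover have "gpl a b (-v) - gpl a b 0 \<le> L * (-v - 0)" using gpl_lip[of a b 0 "-v"] assms 2 by (auto simp: L_def)
      moreover have "gpl a b 0 = 0" using assms by simp
      ultimately show ?thesis using 2 by (auto simp: fpl_def algebra_simps)
    next
      case 3 then show ?thesis using gpl_lip[of a b v w] assms that by (auto simp: fpl_def L_def)
    qed
  qed
  show ?thesis
  proof (cases "v \<le> w")
    case True
    then show ?thesis using main[OF True] fpl_smono[of a b v w] assms
      by (cases "v = w") (auto simp: L_def)
  next
    case False
    then show ?thesis using main[of w v] fpl_smono[of a b w v] assms
      by (auto simp: L_def)
  qed
qed



definition okseq :: "(nat \<Rightarrow> real) \<Rightarrow> bool" where "okseq r \<longleftrightarrow> (\<forall>n. okr (r n))"

definition psi :: "(nat \<Rightarrow> real) \<Rightarrow> (nat \<Rightarrow> real) \<Rightarrow> real \<Rightarrow> real" where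
  "psi r r' x = (if x < 1 then x else of_int \<lfloor>x\<rfloor> + 1/2 + fpl (r (blk x)) (r' (blk x)) (uoff x))"

lemma psi_small: "x < 1 \<Longrightarrow> psi r r' x = x" by (simp add: psi_def)

lemma psi_big:
  assumes "okseq r" "okseq r'" "1 \<le> x"
  shows "\<lfloor>psi r r' x\<rfloor> = \<lfloor>x\<rfloor>" "uoff (psi r r' x) = fpl (r (blk x)) (r' (blk x)) (uoff x)"
    "blk (psi r r' x) = blk x" "1 \<le> psi r r' x"
proof -
  have ok: "okr (r (blk x))" "okr (r' (blk x))" using assms by (auto simp: okseq_def)
  note rg = fpl_range[OF ok uoff_range]
  have e: "psi r r' x = of_int \<lfloor>x\<rfloor> + 1/2 + fpl (r (blk x)) (r' (blk x)) (uoff x)"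
    using assms by (simp add: psi_def)
  show f: "\<lfloor>psi r r' x\<rfloor> = \<lfloor>x\<rfloor>" unfolding e by (rule floor_pt) (use rg in auto)
  show "uoff (psi r r' x) = fpl (r (blk x)) (r' (blk x)) (uoff x)" unfolding e by (rule floor_pt) (use rg in auto)
  show "blk (psi r r' x) = blk x" using f by (simp add: blk_def)
  have "1 \<le> \<lfloor>x\<rfloor>" using assms by linarith
  then show "1 \<le> psi r r' x" using f by linarith
qed

lemma psi_inv:
  assumes "okseq r" "okseq r'" shows "psi r' r (psi r r' x) = x"
proof (cases "x < 1")
  case True then show ?thesis by (simp add: psi_def)
next
  case False
  then have x1: "1 \<le> x" by simp
  note pb = psi_big[OF assms x1]
  have ok: "okr (r (blk x))" "okr (r' (blk x))" using assms by (auto simp: okseq_def)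
  have "psi r' r (psi r r' x) = of_int \<lfloor>psi r r' x\<rfloor> + 1/2 + fpl (r' (blk (psi r r' x))) (r (blk (psi r r' x))) (uoff (psi r r' x))"
    using pb(4) by (simp add: psi_def)
  also have "\<dots> = of_int \<lfloor>x\<rfloor> + 1/2 + uoff x" using pb fpl_inv[OF ok] by simp
  also have "\<dots> = x" by (simp add: uoff_def)
  finally show ?thesis .
qed

lemma psi_smono:
  assumes "okseq r" "okseq r'" shows "strict_mono (psi r r')"
proof (rule strict_monoI)
  fix x y :: real assume xy: "x < y"
  show "psi r r' x < psi r r' y"
  proof (cases "y < 1")
    case True then show ?thesis using xy by (simp add: psi_def)
  next
    case False
    then have y1: "1 \<le> y" by simp
    note pby = psi_big[OF assms y1]
    show ?thesis
    proof (cases "x < 1")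
      case True then show ?thesis using pby(4) by (simp add: psi_def)
    next
      case False
      then have x1: "1 \<le> x" by simp
      note pbx = psi_big[OF assms x1]
      have ok: "okr (r (blk x))" "okr (r' (blk x))" using assms by (auto simp: okseq_def)
      show ?thesis
      proof (cases "\<lfloor>x\<rfloor> = \<lfloor>y\<rfloor>")
        case True
        then have "blk x = blk y" "uoff x < uoff y" using xy by (auto simp: blk_def uoff_def)
        then have "fpl (r (blk x)) (r' (blk x)) (uoff x) < fpl (r (blk y)) (r' (blk y)) (uoff y)"
          using fpl_smono[OF ok] by metis
        then show ?thesis using x1 y1 True by (simp add: psi_def)
      next
        case False
        then have "\<lfloor>x\<rfloor> + 1 \<le> \<lfloor>y\<rfloor>" using xy by (meson floor_mono int_one_le_iff_zero_less le_less not_less zless_imp_add1_zle)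
        moreover have "psi r r' x < of_int \<lfloor>x\<rfloor> + 1" using pbx(1) by linarith
        moreover have "of_int \<lfloor>y\<rfloor> \<le> psi r r' y" using pby(1) by linarith
        ultimately show ?thesis by linarith
      qed
    qed
  qed
qed

lemma psi_near: assumes "okseq r" "okseq r'" shows "\<bar>psi r r' x - x\<bar> < 1"
proof (cases "x < 1")
  case True then show ?thesis by (simp add: psi_def)
next
  case False
  then have x1: "1 \<le> x" by simp
  note pb = psi_big[OF assms x1]
  have "psi r r' x = of_int \<lfloor>x\<rfloor> + 1/2 + uoff (psi r r' x)" using pb(1) x_decomp by metis
  moreover have "x = of_int \<lfloor>x\<rfloor> + 1/2 + uoff x" using x_decomp by metis
  ultimately show ?thesis using uoff_range[of x] uoff_range[of "psi r r' x"] by linarith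
qed

lemma psi_zero [simp]: "psi r r' 0 = 0" by (simp add: psi_def)

definition shpc :: "nat \<Rightarrow> real \<Rightarrow> real \<Rightarrow> bool" where
  "shpc i a u \<longleftrightarrow> (if i = 0 then \<bar>u\<bar> < a else if i = 1 then -a \<le> u \<and> u < a else \<bar>u\<bar> \<le> a)"

definition shp :: "nat \<Rightarrow> (nat \<Rightarrow> real) \<Rightarrow> real set" where
  "shp i r = {x. 1 \<le> x \<and> shpc i (r (blk x)) (uoff x)}"

lemma psi_shp:
  assumes "okseq r" "okseq r'" shows "psi r r' x \<in> shp i r' \<longleftrightarrow> x \<in> shp i r"
proof (cases "x < 1")
  case True
  then show ?thesis by (simp add: psi_def shp_def)
next
  case False
  then have x1: "1 \<le> x" by simp
  note pb = psi_big[OF assms x1]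
  have ok: "okr (r (blk x))" "okr (r' (blk x))" using assms by (auto simp: okseq_def)
  show ?thesis using x1 pb fpl_abs_less[OF ok] fpl_abs_le[OF ok] fpl_less[OF ok] fpl_ge[OF ok]
    by (auto simp: shp_def shpc_def)
qed

lemma shp_sub: "shp i r \<subseteq> {x. 1 \<le> x \<and> \<bar>uoff x\<bar> \<le> r (blk x)}"
  by (auto simp: shp_def shpc_def)

lemma shp_sup: "{x. 1 \<le> x \<and> \<bar>uoff x\<bar> < r (blk x)} \<subseteq> shp i r"
  by (auto simp: shp_def shpc_def)



lemma TR_sep1:
  assumes "lowb \<rho>" "a \<noteq> 0"
  obtains d where "d > 0" "\<And>e. e < d \<Longrightarrow> openin (TR \<rho>) (- cball a e)"
proof -
  obtain d c where dc: "d>0" "c>0" "\<forall>x. \<bar>x - a\<bar> < d \<longrightarrow> c \<le> \<rho> x"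
    using assms unfolding lowb_def by blast
  have "openin (TR \<rho>) (- cball a e)" if "e < d" for e
    unfolding openin_TR
  proof (intro conjI impI)
    show "open (- cball a e)" by auto
    show "\<exists>e'>0. \<forall>x. \<rho> x < e' \<longrightarrow> x \<in> - cball a e"
    proof (intro exI[of _ c] conjI allI impI)
      fix x assume "\<rho> x < c"
      then have "\<not> \<bar>x - a\<bar> < d" using dc by force
      then show "x \<in> - cball a e" using that by (auto simp: dist_real_def)
    qed (use dc in auto)
  qed
  then show ?thesis using that dc by blast
qed

definition rhoS :: "real set \<Rightarrow> real \<Rightarrow> real" where
  "rhoS S x = (if x \<in> S then 1/x else \<bar>x\<bar>)"

lemma lowb_rhoS: assumes "S \<subseteq> {x. 1 \<le> x}" shows "lowb (rhoS S)"
  unfolding lowb_def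
proof (intro allI impI)
  fix a :: real assume a: "a \<noteq> 0"
  have "min (\<bar>a\<bar>/2) (1/(2*\<bar>a\<bar>)) \<le> rhoS S x" if x: "\<bar>x - a\<bar> < \<bar>a\<bar>/2" for x
  proof (cases "x \<in> S")
    case True
    then have "1 \<le> x" using assms by auto
    moreover have "x \<le> 2 * \<bar>a\<bar>" using x by linarith
    ultimately have "1/(2*\<bar>a\<bar>) \<le> 1/x" by (intro divide_left_mono) auto
    then show ?thesis using True by (simp add: rhoS_def)
  next
    case False
    have "\<bar>a\<bar>/2 \<le> \<bar>x\<bar>" using x by linarith
    then show ?thesis using False by (simp add: rhoS_def)
  qed
  moreover have "\<bar>a\<bar>/2 > 0" "min (\<bar>a\<bar>/2) (1/(2*\<bar>a\<bar>)) > 0" using a by auto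
  ultimately show "\<exists>d>0. \<exists>c>0. \<forall>x. \<bar>x - a\<bar> < d \<longrightarrow> c \<le> rhoS S x" by blast
qed

lemma openin_TS:
  assumes "S \<subseteq> {x. 1 \<le> x}"
  shows "openin (TR (rhoS S)) U \<longleftrightarrow> open U \<and> (0 \<in> U \<longrightarrow> (\<exists>M. \<forall>x\<in>S. M < x \<longrightarrow> x \<in> U))"
  unfolding openin_TR
proof (intro iffI conjI impI)
  assume A: "open U \<and> (0 \<in> U \<longrightarrow> (\<exists>e>0. \<forall>x. rhoS S x < e \<longrightarrow> x \<in> U))"
  then show "open U" by auto
  assume "0 \<in> U"
  then obtain e where e: "e > 0" "\<forall>x. rhoS S x < e \<longrightarrow> x \<in> U" using A by auto
  show "\<exists>M. \<forall>x\<in>S. M < x \<longrightarrow> x \<in> U"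
  proof (intro exI[of _ "1/e"] ballI impI)
    fix x assume "x \<in> S" "1/e < x"
    moreover then have "0 < x" using e by (smt (verit) divide_pos_pos)
    ultimately have "1/x < e" using e by (simp add: divide_less_eq mult.commute)
    then show "x \<in> U" using e \<open>x \<in> S\<close> by (auto simp: rhoS_def)
  qed
next
  assume A: "open U \<and> (0 \<in> U \<longrightarrow> (\<exists>M. \<forall>x\<in>S. M < x \<longrightarrow> x \<in> U))"
  then show "open U" by auto
  assume z: "0 \<in> U"
  then obtain M where M: "\<forall>x\<in>S. M < x \<longrightarrow> x \<in> U" using A by auto
  obtain e0 where e0: "e0 > 0" "ball 0 e0 \<subseteq> U" using A z open_contains_ball by blast
  define M' where "M' = max M 1"
  define e where "e = min e0 (1/M')"
  have M'1: "1 \<le> M'" by (simp add: M'_def)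
  have e: "e > 0" using e0 M'1 by (simp add: e_def)
  show "\<exists>e>0. \<forall>x. rhoS S x < e \<longrightarrow> x \<in> U"
  proof (intro exI[of _ e] conjI allI impI e)
    fix x assume x: "rhoS S x < e"
    show "x \<in> U"
    proof (cases "x \<in> S")
      case True
      then have x1: "1 \<le> x" using assms by auto
      have "1/x < 1/M'" using x True by (simp add: rhoS_def e_def)
      then have "M' < x" using x1 M'1 by (simp add: frac_less2 divide_less_eq)
      then show ?thesis using M True by (auto simp: M'_def)
    next
      case False
      then have "\<bar>x\<bar> < e0" using x by (simp add: rhoS_def e_def)
      then show ?thesis using e0 by (auto simp: dist_real_def)
    qed
  qed
qed

lemma TS_le:
  assumes "S1 \<subseteq> {x. 1 \<le> x}" "S2 \<subseteq> {x. 1 \<le> x}" "\<And>x. x \<in> S1 \<Longrightarrow> M < x \<Longrightarrow> x \<in> S2"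
  shows "top_le (TR (rhoS S2)) (TR (rhoS S1))"
  unfolding top_le_def openin_TS[OF assms(1)] openin_TS[OF assms(2)]
proof (intro allI impI conjI)
  fix U assume U: "open U \<and> (0 \<in> U \<longrightarrow> (\<exists>M. \<forall>x\<in>S2. M < x \<longrightarrow> x \<in> U))"
  then show "open U" by auto
  assume "0 \<in> U"
  then obtain M2 where "\<forall>x\<in>S2. M2 < x \<longrightarrow> x \<in> U" using U by auto
  then show "\<exists>M. \<forall>x\<in>S1. M < x \<longrightarrow> x \<in> U" using assms(3)
    by (intro exI[of _ "max M M2"]) auto
qed

lemma TS_homeo:
  assumes r: "okseq r" "okseq r'" and S: "S \<subseteq> {x. 1 \<le> x}" "S' \<subseteq> {x. 1 \<le> x}"
    and sh: "\<And>x. psi r r' x \<in> S' \<longleftrightarrow> x \<in> S"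
  shows "TR (rhoS S) homeomorphic_space TR (rhoS S')"
proof (rule TR_homeo[OF psi_smono[OF r] psi_smono[OF r(2,1)] psi_inv[OF r] psi_inv[OF r(2,1)] psi_zero])
  have gen: "compat (rhoS A) (rhoS B) (psi a b)"
    if ab: "okseq a" "okseq b" "A \<subseteq> {x. 1 \<le> x}" "B \<subseteq> {x. 1 \<le> x}" "\<And>x. psi a b x \<in> B \<longleftrightarrow> x \<in> A"
    for a b A B
    unfolding compat_def
  proof (intro allI impI)
    fix e :: real assume e: "e > 0"
    show "\<exists>d>0. \<forall>x. rhoS A x < d \<longrightarrow> rhoS B (psi a b x) < e"
    proof (intro exI[of _ "min (1/2) (e/2)"] conjI allI impI)
      fix x assume x: "rhoS A x < min (1/2) (e/2)"
      show "rhoS B (psi a b x) < e"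
      proof (cases "x \<in> A")
        case True
        then have x1: "1 \<le> x" using ab by auto
        have "1/x < 1/2" using x True by (simp add: rhoS_def)
        then have x2: "2 < x" using x1 by (simp add: divide_less_eq)
        have "1/x < e/2" using x True by (simp add: rhoS_def)
        then have xe: "2 < e * x" using x1 by (simp add: divide_less_eq)
        have "x - 1 < psi a b x" using psi_near[OF ab(1,2), of x] by linarith
        then have p: "x/2 < psi a b x" using x2 by linarith
        then have "1 / psi a b x < 1/(x/2)" using x2 by (intro divide_strict_left_mono) auto
        also have "1/(x/2) < e" using xe x2 by (simp add: divide_less_eq mult.commute)
        finally show ?thesis using ab(5) True by (simp add: rhoS_def)
      next
        case False
        then have "\<bar>x\<bar> < 1/2" "\<bar>x\<bar> < e/2" using x by (auto simp: rhoS_def)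
        then have "psi a b x = x" by (simp add: psi_def)
        then show ?thesis using ab(5)[of x] False \<open>\<bar>x\<bar> < e/2\<close> e by (simp add: rhoS_def)
      qed
    qed (use e in auto)
  qed
  show "compat (rhoS S) (rhoS S') (psi r r')" by (rule gen) (use assms in auto)
  show "compat (rhoS S') (rhoS S) (psi r' r)"
  proof (rule gen)
    fix x show "psi r' r x \<in> S \<longleftrightarrow> x \<in> S'"
      using sh[of "psi r' r x"] psi_inv[OF r(2,1), of x] by simp
  qed (use assms in auto)
qed



definition bset :: "(nat \<Rightarrow> real) \<Rightarrow> (nat \<Rightarrow> real) \<Rightarrow> real set" where
  "bset a b = {x. 1 \<le> x \<and> a (blk x) < uoff x \<and> uoff x < b (blk x)}"

definition cbset :: "(nat \<Rightarrow> real) \<Rightarrow> (nat \<Rightarrow> real) \<Rightarrow> real set" where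
  "cbset a b = {x. 1 \<le> x \<and> a (blk x) \<le> uoff x \<and> uoff x \<le> b (blk x)}"

lemma pt_props:
  assumes "-1/2 \<le> v" "v < 1/2"
  shows "blk (real n + 1/2 + v) = n" "uoff (real n + 1/2 + v) = v" "\<lfloor>real n + 1/2 + v\<rfloor> = int n"
  using floor_pt[OF assms, of "int n"] by (auto simp: blk_def)

lemma open_bset:
  assumes "\<And>n. -1/2 < a n" "\<And>n. b n \<le> 1/2"
  shows "open (bset a b)"
  unfolding open_dist
proof (intro ballI)
  fix x assume x: "x \<in> bset a b"
  define n where "n = \<lfloor>x\<rfloor>"
  define d where "d = min (uoff x - a (blk x)) (b (blk x) - uoff x)"
  have d: "d > 0" using x by (auto simp: bset_def d_def)
  show "\<exists>e>0. \<forall>y. dist y x < e \<longrightarrow> y \<in> bset a b"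
  proof (intro exI[of _ d] conjI allI impI d)
    fix y assume "dist y x < d"
    then have yx: "\<bar>y - x\<bar> < d" by (simp add: dist_real_def)
    define v where "v = uoff x + (y - x)"
    have v1: "a (blk x) < v" "v < b (blk x)" using yx by (auto simp: v_def d_def)
    have v2: "-1/2 \<le> v" "v < 1/2" using v1 assms(1)[of "blk x"] assms(2)[of "blk x"]
      by auto
    have ye: "y = of_int n + 1/2 + v" by (simp add: v_def n_def uoff_def)
    have fl: "\<lfloor>y\<rfloor> = n" "uoff y = v" using floor_pt[OF v2, of n] ye by auto
    have "blk y = blk x" using fl by (simp add: blk_def n_def)
    moreover have "1 \<le> y"
    proof -
      have "1 \<le> x" using x by (simp add: bset_def)
      then have "1 \<le> n" unfolding n_def by linarith
      then show ?thesis using fl(1) by linarith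
    qed
    ultimately show "y \<in> bset a b" using fl v1 by (auto simp: bset_def)
  qed
qed

lemma same_floor:
  assumes "\<bar>x - y\<bar> < 1/20" "-9/20 \<le> uoff y" "uoff y \<le> 9/20"
  shows "\<lfloor>x\<rfloor> = \<lfloor>y\<rfloor>"
proof -
  define v where "v = uoff y + (x - y)"
  have e: "x = of_int \<lfloor>y\<rfloor> + 1/2 + v" by (simp add: uoff_def v_def)
  have "x - y < 1/20" "-(x - y) < 1/20" using assms(1) unfolding abs_less_iff by auto
  then have "-1/2 \<le> v" "v < 1/2" using assms(2,3) unfolding v_def by linarith+
  from floor_pt(1)[OF this, of "\<lfloor>y\<rfloor>"] e show ?thesis by simp
qed

lemma closed_cbset:
  assumes "\<And>n. -9/20 \<le> a n" "\<And>n. b n \<le> 9/20"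
  shows "closed (cbset a b)"
  unfolding closed_def open_dist
proof (intro ballI)
  fix x assume "x \<in> - cbset a b"
  then have x: "x \<notin> cbset a b" by auto
  have far: "y \<notin> cbset a b" if "\<lfloor>y\<rfloor> \<noteq> \<lfloor>x\<rfloor>" "\<bar>y - x\<bar> < 1/20" for y
  proof
    assume y: "y \<in> cbset a b"
    then have "-9/20 \<le> uoff y" "uoff y \<le> 9/20" using assms[of "blk y"] by (auto simp: cbset_def)
    moreover have "\<bar>x - y\<bar> < 1/20" using that by linarith
    ultimately have "\<lfloor>x\<rfloor> = \<lfloor>y\<rfloor>" using same_floor[of x y] by auto
    then show False using that by simp
  qed
  show "\<exists>e>0. \<forall>y. dist y x < e \<longrightarrow> y \<in> - cbset a b"
  proof (cases "1 \<le> x")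
    case False
    show ?thesis
    proof (intro exI[of _ "1/20"] conjI allI impI)
      fix y assume "dist y x < 1/20"
      then have yx: "\<bar>y - x\<bar> < 1/20" by (simp add: dist_real_def)
      show "y \<in> - cbset a b"
      proof (cases "1 \<le> y")
        case True
        have "\<lfloor>y\<rfloor> = 1" using True yx False by (intro floor_unique) auto
        moreover have "y < 1 + 1/20" using yx False unfolding abs_less_iff by linarith
        ultimately have "uoff y < -9/20" "blk y = 1" by (auto simp: uoff_def blk_def)
        then show ?thesis using assms(1)[of 1] by (auto simp: cbset_def)
      qed (auto simp: cbset_def)
    qed auto
  next
    case True
    then have out: "uoff x < a (blk x) \<or> b (blk x) < uoff x" using x by (auto simp: cbset_def)
    define d where "d = min (1/20) (if uoff x < a (blk x) then a (blk x) - uoff x else uoff x - b (blk x))"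
    have d: "d > 0" using out by (auto simp: d_def)
    show ?thesis
    proof (intro exI[of _ d] conjI allI impI d)
      fix y assume "dist y x < d"
      then have yx: "\<bar>y - x\<bar> < d" by (simp add: dist_real_def)
      show "y \<in> - cbset a b"
      proof (cases "\<lfloor>y\<rfloor> = \<lfloor>x\<rfloor>")
        case True
        then have "blk y = blk x" "uoff y - uoff x = y - x" by (auto simp: blk_def uoff_def)
        then have "uoff y < a (blk y) \<or> b (blk y) < uoff y" using out yx
          by (auto simp: d_def split: if_splits)
        then show ?thesis by (auto simp: cbset_def)
      next
        case False
        then show ?thesis using far[of y] yx by (auto simp: d_def)
      qed
    qed
  qed
qed

definition goodr :: "(nat \<Rightarrow> real) \<Rightarrow> bool" where
  "goodr r \<longleftrightarrow> okseq r \<and> (\<forall>n. r n \<le> 2/5)"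

lemma shp_ge1: "shp i r \<subseteq> {x. 1 \<le> x}" by (auto simp: shp_def)

lemma second_countable_eucl: "second_countable euclideanreal"
proof -
  obtain \<B> :: "real set set" where B: "countable \<B>" "\<And>C. C \<in> \<B> \<Longrightarrow> open C"
       "\<And>S. open S \<Longrightarrow> \<exists>U. U \<subseteq> \<B> \<and> S = \<Union>U"
    using univ_second_countable by blast
  show ?thesis unfolding second_countable_def
  proof (intro exI[of _ \<B>] conjI ballI allI impI)
    fix U x assume "openin euclideanreal U \<and> x \<in> U"
    then obtain \<U> where "\<U> \<subseteq> \<B>" "U = \<Union>\<U>" "x \<in> U" using B(3) by auto
    then show "\<exists>V\<in>\<B>. x \<in> V \<and> V \<subseteq> U" by auto
  qed (use B in auto)
qed

lemma TS_second_countable: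
  assumes S: "S \<subseteq> {x. 1 \<le> x}" "open S"
  shows "second_countable (TR (rhoS S))"
proof -
  obtain \<B> :: "real set set" where B: "countable \<B>" "\<And>C. C \<in> \<B> \<Longrightarrow> open C"
       "\<And>S. open S \<Longrightarrow> \<exists>U. U \<subseteq> \<B> \<and> S = \<Union>U"
    using univ_second_countable by blast
  define \<B>' where "\<B>' = (\<lambda>V. V - {0}) ` \<B> \<union> range (\<lambda>k::nat. ball 0 (1/(real k+1)) \<union> (S \<inter> {real k<..}))"
  show ?thesis unfolding second_countable_def
  proof (intro exI[of _ \<B>'] conjI ballI allI impI)
    show "countable \<B>'" using B by (auto simp: \<B>'_def)
  next
    fix V assume "V \<in> \<B>'"
    then show "openin (TR (rhoS S)) V"
    proof (auto simp: \<B>'_def)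
      fix C assume "C \<in> \<B>"
      then show "openin (TR (rhoS S)) (C - {0})" using B(2) by (intro openin_TR_no0) auto
    next
      fix k :: nat
      show "openin (TR (rhoS S)) (ball 0 (1/(real k+1)) \<union> (S \<inter> {real k<..}))"
        unfolding openin_TS[OF S(1)] using S by (auto intro!: exI[of _ "real k"] open_Un open_Int)
    qed
  next
    fix U x assume Ux: "openin (TR (rhoS S)) U \<and> x \<in> U"
    then have oU: "open U" "x \<in> U" by (auto simp: openin_TS[OF S(1)])
    show "\<exists>V\<in>\<B>'. x \<in> V \<and> V \<subseteq> U"
    proof (cases "x = 0")
      case False
      obtain \<U> where "\<U> \<subseteq> \<B>" "U - {0} = \<Union>\<U>" using B(3)[of "U - {0}"] oU by auto
      then obtain C where "C \<in> \<B>" "x \<in> C" "C \<subseteq> U - {0}" using oU False by blast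
      then show ?thesis by (intro bexI[of _ "C - {0}"]) (auto simp: \<B>'_def)
    next
      case True
      then obtain M where M: "\<forall>y\<in>S. M < y \<longrightarrow> y \<in> U" using Ux by (auto simp: openin_TS[OF S(1)])
      obtain e where e: "e > 0" "ball 0 e \<subseteq> U" using oU True open_contains_ball by blast
      obtain k :: nat where k: "max M (1/e) < real k" using reals_Archimedean2 by blast
      have "1/(real k + 1) < e" using k e by (simp add: divide_less_eq mult.commute) (smt (verit) divide_less_eq mult.commute)
      then have "ball 0 (1/(real k+1)) \<union> (S \<inter> {real k<..}) \<subseteq> U" using e M k by auto
      then show ?thesis using True by (intro bexI[of _ "ball 0 (1/(real k+1)) \<union> (S \<inter> {real k<..})"]) (auto simp: \<B>'_def)
    qed
  qed
qed

lemma open_shp0: assumes "okseq r" shows "open (shp 0 r)"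
proof -
  have "shp 0 r = bset (\<lambda>n. - r n) r" by (auto simp: shp_def shpc_def bset_def)
  moreover have "-1/2 < - r n" for n using assms by (auto simp: okseq_def okr_def)
  moreover have "r n \<le> 1/2" for n
  proof -
    have "okr (r n)" using assms by (simp add: okseq_def)
    then show ?thesis by (simp add: okr_def)
  qed
  ultimately show ?thesis using open_bset by metis
qed



lemma goodr_props: assumes "goodr r" shows "0 < r n" "r n \<le> 2/5" "okr (r n)" "okseq r"
  using assms by (auto simp: goodr_def okseq_def okr_def)

lemma not_regular_shp:
  assumes r: "goodr r" and i: "i = 0 \<or> i = 1"
  shows "\<not> regular_space (TR (rhoS (shp i r)))"
proof
  let ?S = "shp i r"
  let ?X = "TR (rhoS ?S)"
  assume reg: "regular_space ?X"
  define U0 where "U0 = ball 0 1 \<union> bset (\<lambda>n. -(r n + 1/20)) r"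
  have oU0: "openin ?X U0"
    unfolding openin_TS[OF shp_ge1] U0_def
  proof (intro conjI impI)
    show "open (ball 0 1 \<union> bset (\<lambda>n. - (r n + 1/20)) r)"
    proof (intro open_Un open_bset)
      fix n
      have "0 < r n" "r n \<le> 2/5" using goodr_props(1,2)[OF r] by auto
      then show "-1/2 < - (r n + 1/20)" "r n \<le> 1/2" by linarith+
    qed auto
    show "\<exists>M. \<forall>x\<in>?S. M < x \<longrightarrow> x \<in> ball 0 1 \<union> bset (\<lambda>n. - (r n + 1/20)) r"
      using i goodr_props[OF r] by (intro exI[of _ 0]) (auto simp: shp_def shpc_def bset_def)
  qed
  have "UNIV - (- U0) = U0" by auto
  then have "closedin ?X (- U0)" using oU0 by (simp add: closedin_def)
  moreover have "0 \<in> topspace ?X - (- U0)" by (simp add: U0_def)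
  ultimately obtain U V where UV: "openin ?X U" "openin ?X V" "0 \<in> U" "- U0 \<subseteq> V" "disjnt U V"
    using reg unfolding regular_space_def by metis
  obtain M where M: "\<forall>x\<in>?S. M < x \<longrightarrow> x \<in> U" using UV(1,3) by (auto simp: openin_TS[OF shp_ge1])
  obtain n :: nat where n: "max M 1 < real n" using reals_Archimedean2 by blast
  have rn: "0 < r n" "r n \<le> 2/5" using goodr_props[OF r] by auto
  define p where "p = real n + 1/2 + r n"
  have pp: "blk p = n" "uoff p = r n" using pt_props[of "r n" n] rn by (auto simp: p_def)
  have "p \<notin> U0" using pp n rn by (auto simp: U0_def bset_def p_def)
  then have "p \<in> V" using UV by auto
  then obtain e where e: "e > 0" "ball p e \<subseteq> V" using UV(2) open_contains_ball
    by (metis openin_TR)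
  define m where "m = min e (r n) / 2"
  have m: "0 < m" "m < e" "m < r n" using e rn by (auto simp: m_def)
  define q where "q = real n + 1/2 + (r n - m)"
  have qq: "blk q = n" "uoff q = r n - m" using pt_props[of "r n - m" n] rn m by (auto simp: q_def)
  have "q \<in> ?S" using qq m rn n by (intro subsetD[OF shp_sup]) (auto simp: q_def)
  moreover have "M < q" using n m rn by (auto simp: q_def)
  ultimately have "q \<in> U" using M by auto
  moreover have "q \<in> V" using e m by (intro subsetD[OF e(2)]) (auto simp: q_def p_def dist_real_def)
  ultimately show False using UV(5) by (auto simp: disjnt_def)
qed

lemma not_first_countable_shp:
  assumes r: "goodr r" and i: "i = 1 \<or> i = 2"
  shows "\<not> first_countable (TR (rhoS (shp i r)))"
proof
  let ?S = "shp i r"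
  let ?X = "TR (rhoS ?S)"
  assume "first_countable ?X"
  then obtain \<B> where B: "countable \<B>" "\<forall>V\<in>\<B>. openin ?X V"
      "\<forall>U. openin ?X U \<and> 0 \<in> U \<longrightarrow> (\<exists>V\<in>\<B>. 0 \<in> V \<and> V \<subseteq> U)"
    unfolding first_countable_def by (metis UNIV_I topspace_TR)
  define B' where "B' = {V\<in>\<B>. 0 \<in> V}"
  have "openin ?X UNIV" by (metis openin_topspace topspace_TR)
  then have B'ne: "B' \<noteq> {}" using B(3) by (auto simp: B'_def)
  have cB': "countable B'" using B(1) by (auto simp: B'_def)
  define W where "W = from_nat_into B'"
  have W: "W k \<in> B'" for k using from_nat_into[OF B'ne] by (simp add: W_def)
  have "\<exists>M::nat. \<forall>x\<in>?S. real M < x \<longrightarrow> x \<in> W k" for k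
  proof -
    have "openin ?X (W k)" "0 \<in> W k" using W[of k] B(2) by (auto simp: B'_def)
    then obtain M where "\<forall>x\<in>?S. M < x \<longrightarrow> x \<in> W k" by (auto simp: openin_TS[OF shp_ge1])
    moreover obtain N :: nat where "M < real N" using reals_Archimedean2 by blast
    ultimately show ?thesis by (intro exI[of _ N]) auto
  qed
  then obtain Mk :: "nat \<Rightarrow> nat" where Mk: "\<And>k. \<forall>x\<in>?S. real (Mk k) < x \<longrightarrow> x \<in> W k" by metis
  define L where "L n = real n + 1/2 - r n" for n
  have rn: "0 < r n" "r n \<le> 2/5" for n using goodr_props[OF r] by auto
  have Lp: "blk (L n) = n" "uoff (L n) = - r n" for n
    using pt_props[of "- r n" n] rn[of n] by (auto simp: L_def)
  have LS: "L n \<in> ?S" if "1 \<le> n" for n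
    using Lp[of n] rn[of n] that i by (auto simp: shp_def shpc_def L_def)
  have "\<exists>d>0. ball (L n) d \<subseteq> W k" if "Mk k < n" for k n
  proof -
    have "L n \<in> W k" using Mk[of k] LS[of n] that rn[of n] by (auto simp: L_def)
    moreover have "open (W k)" using W[of k] B(2) by (auto simp: B'_def openin_TR)
    ultimately show ?thesis using open_contains_ball by blast
  qed
  then obtain \<delta> where \<delta>: "\<And>k n. Mk k < n \<Longrightarrow> \<delta> k n > 0 \<and> ball (L n) (\<delta> k n) \<subseteq> W k" by metis
  define \<eta> where "\<eta> n = Min (((\<lambda>k. min (\<delta> k n) (1/20) / 2) ` {k. k \<le> n \<and> Mk k < n}) \<union> {1/40})" for n
  have fin: "finite (((\<lambda>k. min (\<delta> k n) (1/20) / 2) ` {k. k \<le> n \<and> Mk k < n}) \<union> {1/40})" for n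
    by auto
  have \<eta>pos: "0 < \<eta> n" for n
    unfolding \<eta>_def using fin[of n] \<delta> by (subst Min_gr_iff) auto
  have \<eta>le: "\<eta> n \<le> 1/40" for n unfolding \<eta>_def using fin[of n] by (intro Min_le) auto
  have \<eta>le2: "\<eta> n \<le> min (\<delta> k n) (1/20) / 2" if "k \<le> n" "Mk k < n" for k n
    unfolding \<eta>_def using fin[of n] that by (intro Min_le) auto
  define U where "U = ball 0 1 \<union> bset (\<lambda>n. -(r n + \<eta> n)) (\<lambda>n. r n + 1/20)"
  have oU: "openin ?X U"
    unfolding openin_TS[OF shp_ge1] U_def
  proof (intro conjI impI)
    show "open (ball 0 1 \<union> bset (\<lambda>n. -(r n + \<eta> n)) (\<lambda>n. r n + 1/20))"
    proof (intro open_Un open_bset)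
      fix n show "-1/2 < -(r n + \<eta> n)" using rn[of n] \<eta>le[of n] by auto
      show "r n + 1/20 \<le> 1/2" using rn[of n] by auto
    qed auto
    show "\<exists>M. \<forall>x\<in>?S. M < x \<longrightarrow> x \<in> ball 0 1 \<union> bset (\<lambda>n. -(r n + \<eta> n)) (\<lambda>n. r n + 1/20)"
    proof (intro exI[of _ 0] ballI impI)
      fix x assume "x \<in> ?S"
      then have "1 \<le> x" "\<bar>uoff x\<bar> \<le> r (blk x)" using shp_sub by auto
      then show "x \<in> ball 0 1 \<union> bset (\<lambda>n. -(r n + \<eta> n)) (\<lambda>n. r n + 1/20)"
        using \<eta>pos[of "blk x"] by (auto simp: bset_def)
    qed
  qed
  then obtain V where V: "V \<in> \<B>" "0 \<in> V" "V \<subseteq> U" using B(3) by (auto simp: U_def)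
  then have "V \<in> B'" by (auto simp: B'_def)
  then obtain k where k: "V = W k" using range_from_nat_into[OF B'ne cB'] by (metis W_def imageE)
  define n where "n = max k (Mk k + 1)"
  have n: "k \<le> n" "Mk k < n" "1 \<le> n" by (auto simp: n_def)
  define z where "z = L n - \<eta> n"
  have "z \<in> ball (L n) (\<delta> k n)" using \<eta>le2[OF n(1,2)] \<eta>pos[of n] \<delta>[OF n(2)] by (auto simp: z_def dist_real_def)
  then have "z \<in> U" using \<delta>[OF n(2)] k V by auto
  moreover have ze: "z = real n + 1/2 + (- r n - \<eta> n)" by (simp add: z_def L_def)
  moreover have zp: "blk z = n" "uoff z = - r n - \<eta> n"
    unfolding ze using pt_props[of "- r n - \<eta> n" n] rn[of n] \<eta>le[of n] \<eta>pos[of n] by auto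
  moreover have "1 < z" using n rn[of n] \<eta>le[of n] by (auto simp: z_def L_def)
  ultimately show False by (auto simp: U_def bset_def)
qed



lemma regular_shp2:
  assumes r: "goodr r"
  shows "regular_space (TR (rhoS (shp 2 r)))"
  unfolding regular_space_def
proof (intro allI impI)
  let ?S = "shp 2 r"
  let ?X = "TR (rhoS ?S)"
  fix C a assume Ca: "closedin ?X C \<and> a \<in> topspace ?X - C"
  define W where "W = - C"
  have "UNIV - C = W" by (auto simp: W_def)
  then have oW: "openin ?X W" and aW: "a \<in> W" using Ca by (auto simp: closedin_def W_def)
  then have oW': "open W" by (simp add: openin_TR)
  have rn: "0 < r n" "r n \<le> 2/5" for n using goodr_props[OF r] by auto
  show "\<exists>U V. openin ?X U \<and> openin ?X V \<and> a \<in> U \<and> C \<subseteq> V \<and> disjnt U V"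
  proof (cases "a = 0")
    case False
    note a0 = False
    obtain d where d: "d > 0" "\<And>e. e < d \<Longrightarrow> openin ?X (- cball a e)"
      using TR_sep1[OF lowb_rhoS[OF shp_ge1[of 2 r]] a0] by blast
    obtain e0 where e0: "e0 > 0" "ball a e0 \<subseteq> W" using oW' aW open_contains_ball by blast
    define e where "e = min e0 (min d \<bar>a\<bar>) / 2"
    have e: "0 < e" "e < d" "e < \<bar>a\<bar>" "e < e0" using e0 d False by (auto simp: e_def)
    have 1: "openin ?X (ball a e)" using e by (intro openin_TR_no0) (auto simp: dist_real_def)
    have 2: "openin ?X (- cball a e)" using d(2) e(2) by blast
    have 3: "a \<in> ball a e" using e by auto
    have 4: "C \<subseteq> - cball a e" using e e0 by (auto simp: W_def subset_iff dist_real_def)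
    have 5: "disjnt (ball a e) (- cball a e)" by (auto simp: disjnt_def)
    show ?thesis using 1 2 3 4 5 by blast
  next
    case True
    then obtain M where M: "\<forall>x\<in>?S. M < x \<longrightarrow> x \<in> W" using oW aW by (auto simp: openin_TS[OF shp_ge1])
    obtain e0 where e0: "e0 > 0" "ball 0 e0 \<subseteq> W" using oW' aW True open_contains_ball by blast
    obtain M' :: nat where M': "M < real M'" using reals_Archimedean2 by blast
    define \<alpha> where "\<alpha> n = real n + 1/2 - r n" for n
    define \<beta> where "\<beta> n = real n + 1/2 + r n" for n
    have inS: "real n + 1/2 + u \<in> W" if "M' < n" "\<bar>u\<bar> \<le> r n" for n u
    proof -
      have "blk (real n + 1/2 + u) = n" "uoff (real n + 1/2 + u) = u"
        using pt_props[of u n] that rn[of n] by auto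
      moreover have "1 \<le> real n + 1/2 + u" "M < real n + 1/2 + u" using that rn[of n] M' by auto
      ultimately show ?thesis using M that by (auto simp: shp_def shpc_def)
    qed
    have "\<exists>\<eta>>0. \<eta> \<le> 1/40 \<and> (M' < n \<longrightarrow> ball (\<alpha> n) (2*\<eta>) \<subseteq> W \<and> ball (\<beta> n) (2*\<eta>) \<subseteq> W)" for n
    proof (cases "M' < n")
      case True
      have "\<alpha> n \<in> W" "\<beta> n \<in> W" using inS[OF True, of "- r n"] inS[OF True, of "r n"] rn[of n]
        by (auto simp: \<alpha>_def \<beta>_def)
      then obtain e1 e2 where "e1 > 0" "ball (\<alpha> n) e1 \<subseteq> W" "e2 > 0" "ball (\<beta> n) e2 \<subseteq> W"
        using oW' open_contains_ball by metis
      then show ?thesis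
        by (intro exI[of _ "min (min e1 e2 / 2) (1/40)"]) (auto simp: subset_iff dist_real_def)
    qed (auto intro: exI[of _ "1/40"])
    then obtain \<eta> where \<eta>: "\<And>n. \<eta> n > 0" "\<And>n. \<eta> n \<le> 1/40"
      "\<And>n. M' < n \<Longrightarrow> ball (\<alpha> n) (2*\<eta> n) \<subseteq> W \<and> ball (\<beta> n) (2*\<eta> n) \<subseteq> W" by metis
    define la where "la n = (if M' < n then -(r n + \<eta> n) else 0)" for n
    define lb where "lb n = (if M' < n then r n + \<eta> n else 0)" for n
    define ka where "ka n = (if M' < n then -(r n + \<eta> n) else 1/5)" for n
    define kb where "kb n = (if M' < n then r n + \<eta> n else -1/5)" for n
    define U where "U = ball 0 (e0/2) \<union> bset la lb"
    define K where "K = cball 0 (e0/2) \<union> cbset ka kb"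
    have bnd: "-1/2 < la n" "lb n \<le> 1/2" "-9/20 \<le> ka n" "kb n \<le> 9/20" for n
      using rn[of n] \<eta>(1,2)[of n] by (auto simp: la_def lb_def ka_def kb_def)
    have cK: "closed K" unfolding K_def using bnd by (intro closed_Un closed_cball closed_cbset) auto
    show ?thesis
    proof (rule exI[of _ U], rule exI[of _ "- K"], intro conjI)
      show "openin ?X U"
        unfolding openin_TS[OF shp_ge1]
      proof (intro conjI impI)
        show "open U" unfolding U_def using bnd by (intro open_Un open_bset open_ball) auto
        show "\<exists>M. \<forall>x\<in>?S. M < x \<longrightarrow> x \<in> U"
        proof (intro exI[of _ "real M' + 1"] ballI impI)
          fix x assume x: "x \<in> ?S" "real M' + 1 < x"
          then have "M' < blk x" unfolding blk_def by linarith
          then show "x \<in> U" using x \<eta>(1)[of "blk x"] shp_sub[of 2 r]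
            by (auto simp: U_def bset_def la_def lb_def)
        qed
      qed
      have "0 \<in> K" using e0 by (auto simp: K_def)
      moreover have "open (- K)" using cK by (simp add: open_Compl)
      ultimately have "openin ?X (- K)" by (intro openin_TR_no0) auto
      then show "openin (TR (rhoS (shp 2 r))) (- K)" by simp
      show "a \<in> U" using True e0 by (auto simp: U_def)
      show "C \<subseteq> - K"
      proof
        fix x assume xC: "x \<in> C"
        show "x \<in> - K"
        proof
          assume "x \<in> K"
          moreover have "x \<notin> cball 0 (e0/2)" using xC e0 by (auto simp: W_def subset_iff dist_real_def)
          ultimately have xk: "x \<in> cbset ka kb" by (auto simp: K_def)
          define n where "n = blk x"
          have x1: "1 \<le> x" using xk by (auto simp: cbset_def)
          have nM: "M' < n" using xk by (auto simp: cbset_def ka_def kb_def n_def split: if_splits)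
          have xu: "-(r n + \<eta> n) \<le> uoff x" "uoff x \<le> r n + \<eta> n"
            using xk nM by (auto simp: cbset_def ka_def kb_def n_def)
          have xe: "x = real n + 1/2 + uoff x" using x1 by (simp add: n_def blk_def uoff_def)
          have "x \<in> W"
          proof (cases "\<bar>uoff x\<bar> \<le> r n")
            case True then show ?thesis using inS[OF nM True] xe by simp
          next
            case False
            then consider "uoff x > r n" | "uoff x < - r n" by linarith
            then show ?thesis
            proof cases
              case 1
              then have "x \<in> ball (\<beta> n) (2 * \<eta> n)" using xu xe \<eta>(1)[of n] by (auto simp: \<beta>_def dist_real_def)
              then show ?thesis using \<eta>(3)[OF nM] by auto
            next
              case 2
              then have "x \<in> ball (\<alpha> n) (2 * \<eta> n)" using xu xe \<eta>(1)[of n] by (auto simp: \<alpha>_def dist_real_def)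
              then show ?thesis using \<eta>(3)[OF nM] by auto
            qed
          qed
          then show False using xC by (simp add: W_def)
        qed
      qed
      show "disjnt U (- K)"
      proof -
        have "bset la lb \<subseteq> cbset ka kb"
          by (auto simp: bset_def cbset_def la_def lb_def ka_def kb_def split: if_splits)
        then have "U \<subseteq> K" by (auto simp: U_def K_def)
        then show ?thesis by (auto simp: disjnt_def)
      qed
    qed
  qed
qed

lemma Lindelof_sub:
  assumes "top_le X euclideanreal" "topspace X = UNIV"
  shows "Lindelof_space (subtopology X S)"
proof (rule Lindelof_space_continuous_map_image[where X = "subtopology euclideanreal S" and f = id])
  show "Lindelof_space (subtopology euclideanreal S)"
    by (intro second_countable_imp_Lindelof_space second_countable_subtopology second_countable_eucl)
  show "continuous_map (subtopology euclideanreal S) (subtopology X S) id"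
    unfolding continuous_map_def
  proof (intro conjI allI impI)
    show "id \<in> topspace (subtopology euclideanreal S) \<rightarrow> topspace (subtopology X S)"
      using assms by auto
    fix U assume "openin (subtopology X S) U"
    then obtain T where T: "openin X T" "U = T \<inter> S" by (auto simp: openin_subtopology)
    then have "open T" using assms by (auto simp: top_le_def)
    then show "openin (subtopology euclideanreal S) {x \<in> topspace (subtopology euclideanreal S). id x \<in> U}"
      using T by (auto simp: openin_subtopology)
  qed
  show "id ` topspace (subtopology euclideanreal S) = topspace (subtopology X S)"
    using assms by auto
qed

lemma hn_shp2:
  assumes r: "goodr r"
  shows "hereditarily normal_space (TR (rhoS (shp 2 r)))"
  unfolding hereditarily_def
proof (intro allI impI)
  fix S :: "real set"
  show "normal_space (subtopology (TR (rhoS (shp 2 r))) S)"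
    by (intro regular_Lindelof_imp_normal_space regular_space_subtopology regular_shp2[OF r]
        Lindelof_sub TR_le_eucl topspace_TR)
qed



definition dm :: "(real \<Rightarrow> real) \<Rightarrow> real \<Rightarrow> real \<Rightarrow> real" where
  "dm \<rho> x y = min (2 * \<bar>x - y\<bar>) (\<rho> x + \<rho> y)"

definition goodrho :: "(real \<Rightarrow> real) \<Rightarrow> bool" where
  "goodrho \<rho> \<longleftrightarrow> \<rho> 0 = 0 \<and> (\<forall>x. 0 \<le> \<rho> x) \<and> (\<forall>x. x \<noteq> 0 \<longrightarrow> 0 < \<rho> x) \<and> (\<forall>x y. \<rho> x \<le> \<rho> y + 2 * \<bar>x - y\<bar>)"

lemma dm_metric: assumes "goodrho \<rho>" shows "Metric_space UNIV (dm \<rho>)"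
proof
  have g: "\<rho> 0 = 0" "\<And>x. 0 \<le> \<rho> x" "\<And>x. x \<noteq> 0 \<Longrightarrow> 0 < \<rho> x" "\<And>x y. \<rho> x \<le> \<rho> y + 2 * \<bar>x - y\<bar>"
    using assms by (auto simp: goodrho_def)
  fix x y z :: real
  show "0 \<le> dm \<rho> x y" using g(2)[of x] g(2)[of y] by (simp add: dm_def)
  show "dm \<rho> x y = dm \<rho> y x" by (simp add: dm_def abs_minus_commute add.commute)
  show "dm \<rho> x y = 0 \<longleftrightarrow> x = y"
  proof
    assume "dm \<rho> x y = 0"
    then have "2 * \<bar>x - y\<bar> = 0 \<or> \<rho> x + \<rho> y = 0" by (auto simp: dm_def min_def split: if_splits)
    then show "x = y"
    proof
      assume "\<rho> x + \<rho> y = 0"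
      then have "\<rho> x = 0" "\<rho> y = 0" using g(2)[of x] g(2)[of y] by linarith+
      then show "x = y" using g(3)[of x] g(3)[of y] by fastforce
    qed auto
  next
    assume "x = y" then show "dm \<rho> x y = 0" using g(2)[of x] by (simp add: dm_def)
  qed
  show "dm \<rho> x z \<le> dm \<rho> x y + dm \<rho> y z"
    using g(4)[of x y] g(4)[of y x] g(4)[of z y] g(4)[of y z] g(2)[of x] g(2)[of y] g(2)[of z]
      abs_triangle_ineq[of "x - y" "y - z"] abs_minus_commute[of z y] abs_minus_commute[of y x]
    by (simp add: dm_def min_def split: if_splits)
qed

lemma infdist_lessE:
  assumes "infdist x A < e" "A \<noteq> {}"
  obtains a where "a \<in> A" "\<bar>x - a\<bar> < e"
proof -
  have "(INF a\<in>A. dist x a) < e" using assms by (simp add: infdist_notempty)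
  then obtain a where "a \<in> A" "dist x a < e" using assms(2) by (auto simp: cINF_less_iff)
  then show ?thesis using that by (auto simp: dist_real_def)
qed



lemma dm_le1: "goodrho \<rho> \<Longrightarrow> dm \<rho> x y \<le> 2 * \<bar>x - y\<bar>" by (simp add: dm_def)
lemma dm_le2: "goodrho \<rho> \<Longrightarrow> dm \<rho> x y \<le> \<rho> x + \<rho> y" by (simp add: dm_def)
lemma dm_cases: "dm \<rho> x y = 2 * \<bar>x - y\<bar> \<or> dm \<rho> x y = \<rho> x + \<rho> y" by (auto simp: dm_def min_def)

lemma TR_eq_mtop:
  assumes g: "goodrho \<rho>"
  shows "TR \<rho> = Metric_space.mtopology UNIV (dm \<rho>)"
proof -
  interpret Metric_space UNIV "dm \<rho>" by (rule dm_metric[OF g])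
  have gg: "\<rho> 0 = 0" "\<And>x. 0 \<le> \<rho> x" "\<And>x. x \<noteq> 0 \<Longrightarrow> 0 < \<rho> x"
    using g by (auto simp: goodrho_def)
  show ?thesis unfolding topology_eq
  proof (intro allI iffI)
    fix U assume U: "openin (TR \<rho>) U"
    then have oU: "open U" by (simp add: openin_TR)
    show "openin mtopology U" unfolding openin_mtopology
    proof (intro conjI allI impI)
      fix x assume x: "x \<in> U"
      obtain e where e: "e > 0" "ball x e \<subseteq> U" using oU x open_contains_ball by blast
      show "\<exists>r>0. mball x r \<subseteq> U"
      proof (cases "x = 0")
        case False
        have "mball x (min (2*e) (\<rho> x)) \<subseteq> U"
        proof
          fix y assume "y \<in> mball x (min (2*e) (\<rho> x))"
          then have y: "dm \<rho> x y < min (2*e) (\<rho> x)" by simp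
          then have "dm \<rho> x y = 2 * \<bar>x - y\<bar>" using dm_cases[of \<rho> x y] gg(2)[of y] by auto
          then have "\<bar>x - y\<bar> < e" using y by auto
          then show "y \<in> U" using e by (auto simp: dist_real_def)
        qed
        then show ?thesis using e gg(3)[OF False] by (intro exI[of _ "min (2*e) (\<rho> x)"]) auto
      next
        case True
        then obtain \<epsilon> where \<epsilon>: "\<epsilon> > 0" "\<forall>y. \<rho> y < \<epsilon> \<longrightarrow> y \<in> U" using U x by (auto simp: openin_TR)
        have "mball x (min (2*e) \<epsilon>) \<subseteq> U"
        proof
          fix y assume "y \<in> mball x (min (2*e) \<epsilon>)"
          then have y: "dm \<rho> 0 y < min (2*e) \<epsilon>" using True by simp
          then consider "2 * \<bar>0 - y\<bar> < 2 * e" | "\<rho> y < \<epsilon>" using dm_cases[of \<rho> 0 y] gg(1) by auto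
          then show "y \<in> U"
          proof cases
            case 1 then show ?thesis using e True by (auto simp: dist_real_def)
          qed (use \<epsilon> in auto)
        qed
        then show ?thesis using e \<epsilon> by (intro exI[of _ "min (2*e) \<epsilon>"]) auto
      qed
    qed auto
  next
    fix U assume U: "openin mtopology U"
    have oU: "open U" unfolding open_dist
    proof
      fix x assume "x \<in> U"
      then obtain r where r: "r > 0" "mball x r \<subseteq> U" using U by (auto simp: openin_mtopology)
      show "\<exists>e>0. \<forall>y. dist y x < e \<longrightarrow> y \<in> U"
      proof (intro exI[of _ "r/2"] conjI allI impI)
        fix y assume "dist y x < r/2"
        then have "dm \<rho> x y < r" using dm_le1[OF g, of x y] by (auto simp: dist_real_def abs_minus_commute)
        then show "y \<in> U" using r by auto
      qed (use r in auto)
    qed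
    show "openin (TR \<rho>) U" unfolding openin_TR
    proof (intro conjI impI oU)
      assume "0 \<in> U"
      then obtain r where r: "r > 0" "mball 0 r \<subseteq> U" using U by (auto simp: openin_mtopology)
      show "\<exists>e>0. \<forall>x. \<rho> x < e \<longrightarrow> x \<in> U"
      proof (intro exI[of _ r] conjI allI impI r)
        fix y assume "\<rho> y < r"
        then have "dm \<rho> 0 y < r" using dm_le2[OF g, of 0 y] gg(1) by auto
        then show "y \<in> U" using r by auto
      qed
    qed
  qed
qed

lemma dm_mcomplete:
  assumes g: "goodrho \<rho>"
  shows "Metric_space.mcomplete UNIV (dm \<rho>)"
proof -
  interpret Metric_space UNIV "dm \<rho>" by (rule dm_metric[OF g])
  have gg: "\<rho> 0 = 0" "\<And>x. 0 \<le> \<rho> x" "\<And>x. x \<noteq> 0 \<Longrightarrow> 0 < \<rho> x"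
    using g by (auto simp: goodrho_def)
  show ?thesis unfolding mcomplete_def
  proof (intro allI impI)
    fix \<sigma> assume "MCauchy \<sigma>"
    then have C: "\<And>\<epsilon>. \<epsilon> > 0 \<Longrightarrow> \<exists>N. \<forall>n n'. N \<le> n \<longrightarrow> N \<le> n' \<longrightarrow> dm \<rho> (\<sigma> n) (\<sigma> n') < \<epsilon>"
      by (auto simp: MCauchy_def)
    show "\<exists>x. limitin mtopology \<sigma> x sequentially"
    proof (cases "\<forall>e>0. \<forall>N. \<exists>n\<ge>N. \<rho> (\<sigma> n) < e")
      case True
      have "limitin mtopology \<sigma> 0 sequentially" unfolding limit_metric_sequentially
      proof (intro conjI allI impI)
        fix \<epsilon> :: real assume \<epsilon>: "\<epsilon> > 0"
        obtain N where N: "\<forall>n n'. N \<le> n \<longrightarrow> N \<le> n' \<longrightarrow> dm \<rho> (\<sigma> n) (\<sigma> n') < \<epsilon>/2" using C[of "\<epsilon>/2"] \<epsilon> by auto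
        obtain n where n: "n \<ge> N" "\<rho> (\<sigma> n) < \<epsilon>/2" using True \<epsilon> by (meson half_gt_zero)
        show "\<exists>N. \<forall>m\<ge>N. \<sigma> m \<in> UNIV \<and> dm \<rho> (\<sigma> m) 0 < \<epsilon>"
        proof (intro exI[of _ N] allI impI conjI)
          fix m assume m: "N \<le> m"
          have "dm \<rho> (\<sigma> m) 0 \<le> dm \<rho> (\<sigma> m) (\<sigma> n) + dm \<rho> (\<sigma> n) 0" by (rule triangle) auto
          also have "dm \<rho> (\<sigma> n) 0 \<le> \<rho> (\<sigma> n)" using dm_le2[OF g, of "\<sigma> n" 0] gg(1) by simp
          finally show "dm \<rho> (\<sigma> m) 0 < \<epsilon>" using N m n by fastforce
        qed auto
      qed auto
      then show ?thesis by blast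
    next
      case False
      then obtain e N0 where e: "e > 0" "\<forall>n\<ge>N0. e \<le> \<rho> (\<sigma> n)" by (auto simp: not_less)
      have "Cauchy \<sigma>" unfolding Cauchy_def
      proof (intro allI impI)
        fix \<epsilon> :: real assume \<epsilon>: "\<epsilon> > 0"
        obtain N where N: "\<forall>n n'. N \<le> n \<longrightarrow> N \<le> n' \<longrightarrow> dm \<rho> (\<sigma> n) (\<sigma> n') < min (2*\<epsilon>) e"
          using C[of "min (2*\<epsilon>) e"] \<epsilon> e by auto
        show "\<exists>M. \<forall>m\<ge>M. \<forall>n\<ge>M. dist (\<sigma> m) (\<sigma> n) < \<epsilon>"
        proof (intro exI[of _ "max N N0"] allI impI)
          fix m n assume mn: "max N N0 \<le> m" "max N N0 \<le> n"
          have d: "dm \<rho> (\<sigma> m) (\<sigma> n) < min (2*\<epsilon>) e" using N mn by auto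
          have "e \<le> \<rho> (\<sigma> m)" "e \<le> \<rho> (\<sigma> n)" using e mn by auto
          then have "dm \<rho> (\<sigma> m) (\<sigma> n) = 2 * \<bar>\<sigma> m - \<sigma> n\<bar>"
            using dm_cases[of \<rho> "\<sigma> m" "\<sigma> n"] d gg(2) e(1) by force
          then show "dist (\<sigma> m) (\<sigma> n) < \<epsilon>" using d by (simp add: dist_real_def)
        qed
      qed
      then obtain L where L: "\<sigma> \<longlonglongrightarrow> L" using Cauchy_convergent_iff convergent_def by blast
      have "limitin mtopology \<sigma> L sequentially" unfolding limit_metric_sequentially
      proof (intro conjI allI impI)
        fix \<epsilon> :: real assume \<epsilon>: "\<epsilon> > 0"
        obtain N where N: "\<forall>n\<ge>N. norm (\<sigma> n - L) < \<epsilon>/2" using L \<epsilon> LIMSEQ_iff half_gt_zero by blast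
        show "\<exists>N. \<forall>n\<ge>N. \<sigma> n \<in> UNIV \<and> dm \<rho> (\<sigma> n) L < \<epsilon>"
        proof (intro exI[of _ N] allI impI conjI)
          fix n assume "N \<le> n"
          then have "\<bar>\<sigma> n - L\<bar> < \<epsilon>/2" using N by auto
          then have a: "2 * \<bar>\<sigma> n - L\<bar> < \<epsilon>" by simp
          show "dm \<rho> (\<sigma> n) L < \<epsilon>" by (rule le_less_trans[OF dm_le1[OF g] a])
        qed auto
      qed auto
      then show ?thesis by blast
    qed
  qed
qed

lemma TR_completely_metrizable:
  assumes "goodrho \<rho>" shows "completely_metrizable_space (TR \<rho>)"
  unfolding completely_metrizable_space_def
  using dm_metric[OF assms] dm_mcomplete[OF assms] TR_eq_mtop[OF assms] by blast



definition C3 :: "real \<Rightarrow> real set" where "C3 s = shp 2 (\<lambda>_. s)"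
definition rho3 :: "real \<Rightarrow> real \<Rightarrow> real" where
  "rho3 s x = min \<bar>x\<bar> (infdist x (C3 s) + 1/(1+\<bar>x\<bar>))"
definition okK :: "real \<Rightarrow> bool" where "okK s \<longleftrightarrow> 1/100 \<le> s \<and> s \<le> 1/50"

lemma C3_ne: assumes "0 \<le> s" shows "3/2 \<in> C3 s"
proof -
  have "blk (real 1 + 1/2 + 0) = 1" "uoff (real 1 + 1/2 + 0) = 0" using pt_props[of 0 1] by auto
  then show ?thesis using assms by (auto simp: C3_def shp_def shpc_def)
qed

lemma inv_lip: fixes x y :: real shows "1/(1+\<bar>x\<bar>) \<le> 1/(1+\<bar>y\<bar>) + \<bar>x - y\<bar>"
proof -
  define D where "D = (1+\<bar>x\<bar>)*(1+\<bar>y\<bar>)"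
  have D: "1 \<le> D" unfolding D_def by (rule order_trans[OF _ mult_mono[of 1 "1+\<bar>x\<bar>" 1 "1+\<bar>y\<bar>"]]) auto
  have "1/(1+\<bar>x\<bar>) - 1/(1+\<bar>y\<bar>) = (\<bar>y\<bar> - \<bar>x\<bar>) / D"
    by (simp add: field_simps D_def)
  also have "\<dots> \<le> \<bar>\<bar>y\<bar> - \<bar>x\<bar>\<bar> / D" by (intro divide_right_mono) (use D in auto)
  also have "\<dots> \<le> \<bar>\<bar>y\<bar> - \<bar>x\<bar>\<bar> / 1" by (rule frac_le) (use D in auto)
  also have "\<dots> \<le> \<bar>x - y\<bar>" by simp
  finally show ?thesis by simp
qed

lemma min_lip: fixes a b c d t :: real shows "a \<le> c + t \<Longrightarrow> b \<le> d + t \<Longrightarrow> min a b \<le> min c d + t"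
  by (auto simp: min_def)

lemma rho3_good: assumes "okK s" shows "goodrho (rho3 s)"
  unfolding goodrho_def
proof (intro conjI allI impI)
  show "rho3 s 0 = 0" using infdist_nonneg[of 0 "C3 s"] by (simp add: rho3_def)
  fix x :: real
  show "0 \<le> rho3 s x" using infdist_nonneg[of x "C3 s"] by (simp add: rho3_def)
  show "x \<noteq> 0 \<Longrightarrow> 0 < rho3 s x" using infdist_nonneg[of x "C3 s"]
    by (simp add: rho3_def) (smt (verit) divide_pos_pos)
  fix y :: real
  have a: "infdist x (C3 s) \<le> infdist y (C3 s) + \<bar>x - y\<bar>"
    using infdist_triangle[of x "C3 s" y] by (simp add: dist_real_def)
  have b: "\<bar>x\<bar> \<le> \<bar>y\<bar> + \<bar>x - y\<bar>" by linarith
  have "infdist x (C3 s) + 1/(1+\<bar>x\<bar>) \<le> (infdist y (C3 s) + \<bar>x - y\<bar>) + (1/(1+\<bar>y\<bar>) + \<bar>x - y\<bar>)"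
    by (rule add_mono[OF a inv_lip])
  also have "\<dots> = (infdist y (C3 s) + 1/(1+\<bar>y\<bar>)) + 2 * \<bar>x - y\<bar>" by (simp add: algebra_simps)
  finally have c: "infdist x (C3 s) + 1/(1+\<bar>x\<bar>) \<le> (infdist y (C3 s) + 1/(1+\<bar>y\<bar>)) + 2 * \<bar>x - y\<bar>" .
  have b': "\<bar>x\<bar> \<le> \<bar>y\<bar> + 2 * \<bar>x - y\<bar>" using b abs_ge_zero[of "x - y"] by argo
  show "rho3 s x \<le> rho3 s y + 2 * \<bar>x - y\<bar>"
    unfolding rho3_def by (rule min_lip[OF b' c])
qed

lemma goodrho_lowb: assumes "goodrho \<rho>" shows "lowb \<rho>"
  unfolding lowb_def
proof (intro allI impI)
  fix a :: real assume a: "a \<noteq> 0"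
  have p: "0 < \<rho> a" and L: "\<And>x. \<rho> a \<le> \<rho> x + 2 * \<bar>a - x\<bar>" using assms a by (auto simp: goodrho_def)
  have "\<rho> a / 2 \<le> \<rho> x" if "\<bar>x - a\<bar> < \<rho> a / 4" for x
    using L[of x] that by (simp add: abs_minus_commute)
  moreover have "\<rho> a / 4 > 0" "\<rho> a / 2 > 0" using p by auto
  ultimately show "\<exists>d>0. \<exists>c>0. \<forall>x. \<bar>x - a\<bar> < d \<longrightarrow> c \<le> \<rho> x" by blast
qed

lemma rho3_small:
  assumes s: "okK s" and x: "rho3 s x < d" and d: "d \<le> 1/40"
  shows "\<bar>x\<bar> < d \<or> (\<exists>y\<in>C3 s. \<bar>x - y\<bar> < d \<and> 1/(1+\<bar>x\<bar>) < d \<and> 1 \<le> x \<and> \<lfloor>x\<rfloor> = \<lfloor>y\<rfloor>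
      \<and> blk x = blk y \<and> uoff x - uoff y = x - y \<and> \<bar>uoff x\<bar> < s + d)"
proof (cases "\<bar>x\<bar> < d")
  case False
  then have A: "infdist x (C3 s) + 1/(1+\<bar>x\<bar>) < d" using x by (auto simp: rho3_def)
  moreover have "0 < 1/(1+\<bar>x\<bar>)" by (simp add: add_pos_nonneg)
  ultimately have "infdist x (C3 s) < d" "1/(1+\<bar>x\<bar>) < d" using infdist_nonneg[of x "C3 s"] by linarith+
  moreover obtain y where y: "y \<in> C3 s" "\<bar>x - y\<bar> < d"
    using infdist_lessE[OF \<open>infdist x (C3 s) < d\<close>] C3_ne[of s] s by (auto simp: okK_def)
  moreover have yy: "1 \<le> y" "\<bar>uoff y\<bar> \<le> s" using y(1) by (auto simp: C3_def shp_def shpc_def)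
  moreover have fl: "\<lfloor>x\<rfloor> = \<lfloor>y\<rfloor>" using same_floor[of x y] yy y d s by (auto simp: okK_def)
  moreover have "1 \<le> x" using fl yy by (metis floor_le_one le_floor_iff of_int_1)
  moreover have "uoff x - uoff y = x - y" using fl by (simp add: uoff_def)
  moreover have "blk x = blk y" using fl by (simp add: blk_def)
  ultimately show ?thesis by auto
qed simp



lemma okK_okr: "okK s \<Longrightarrow> okr s" by (auto simp: okK_def okr_def)
lemma okK_okseq: "okK s \<Longrightarrow> okseq (\<lambda>_. s)" by (auto simp: okseq_def okK_okr)

lemma K3_le:
  assumes "okK s" "okK s'" "s \<le> s'"
  shows "top_le (TR (rho3 s')) (TR (rho3 s))"
proof (rule TR_le)
  fix e :: real assume "e > 0"
  have "C3 s \<subseteq> C3 s'" using assms by (auto simp: C3_def shp_def shpc_def)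
  then have "infdist x (C3 s') \<le> infdist x (C3 s)" for x
    using infdist_mono C3_ne assms by (metis okK_def order_trans zero_le_divide_1_iff zero_le_numeral empty_iff)
  then have "rho3 s' x \<le> rho3 s x" for x unfolding rho3_def
    by (meson add_right_mono dual_order.refl min.mono)
  then show "\<exists>d>0. \<forall>x. rho3 s x < d \<longrightarrow> rho3 s' x < e" using \<open>e > 0\<close>
    by (meson le_less_trans)
qed

lemma K3_not_le:
  assumes s: "okK s" "okK s'" "s < s'"
  shows "\<not> top_le (TR (rho3 s)) (TR (rho3 s'))"
proof -
  define m where "m = (s + s')/2"
  have m: "s < m" "m < s'" "m \<le> 1/50" using s by (auto simp: m_def okK_def)
  define U where "U = ball 0 1 \<union> bset (\<lambda>_. - m) (\<lambda>_. m)"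
  define e where "e = min (1/40) ((s' - s)/4)"
  have e4: "e \<le> (s' - s)/4" unfolding e_def by (rule min.cobounded2)
  have e: "0 < e" "e \<le> 1/40" "s + e < m" using s e4 by (auto simp: e_def m_def)
  show ?thesis
  proof (rule TR_not_le[of U e])
    show "open U" unfolding U_def using m s by (intro open_Un open_bset open_ball) (auto simp: okK_def)
    show "0 \<in> U" by (simp add: U_def)
    show "0 < e" by (fact e(1))
    fix x assume "rho3 s x < e"
    then have "\<bar>x\<bar> < e \<or> (\<exists>y\<in>C3 s. \<bar>x - y\<bar> < e \<and> 1/(1+\<bar>x\<bar>) < e \<and> 1 \<le> x \<and> \<lfloor>x\<rfloor> = \<lfloor>y\<rfloor>
      \<and> blk x = blk y \<and> uoff x - uoff y = x - y \<and> \<bar>uoff x\<bar> < s + e)"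
      using rho3_small[OF s(1) _ e(2)] by blast
    then show "x \<in> U"
    proof
      assume "\<bar>x\<bar> < e" then show ?thesis using e by (auto simp: U_def)
    next
      assume "\<exists>y\<in>C3 s. \<bar>x - y\<bar> < e \<and> 1/(1+\<bar>x\<bar>) < e \<and> 1 \<le> x \<and> \<lfloor>x\<rfloor> = \<lfloor>y\<rfloor>
      \<and> blk x = blk y \<and> uoff x - uoff y = x - y \<and> \<bar>uoff x\<bar> < s + e"
      then have "1 \<le> x" "\<bar>uoff x\<bar> < m" using e by auto
      then show ?thesis by (auto simp: U_def bset_def)
    qed
  next
    fix e' :: real assume e': "e' > 0"
    obtain n :: nat where n: "1/e' < real n" using reals_Archimedean2 by blast
    have "0 < 1/e'" using e' by simp
    then have "0 < real n" using n by linarith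
    then have n1: "1 \<le> n" by simp
    define x where "x = real n + 1/2 + s'"
    have xp: "blk x = n" "uoff x = s'" using pt_props[of s' n] s by (auto simp: x_def okK_def)
    have xC: "x \<in> C3 s'" using xp n1 s by (auto simp: C3_def shp_def shpc_def x_def okK_def)
    have "1/(1+\<bar>x\<bar>) < e'"
    proof -
      have "0 < x" using n1 s by (auto simp: x_def okK_def)
      have "1/e' < 1 + \<bar>x\<bar>" using n s by (auto simp: x_def okK_def)
      then have "1 < (1 + \<bar>x\<bar>) * e'" using e' by (simp add: pos_divide_less_eq)
      moreover have "0 < 1 + \<bar>x\<bar>" by simp
      ultimately show ?thesis by (simp add: pos_divide_less_eq mult.commute)
    qed
    then have "rho3 s' x < e'" using xC by (simp add: rho3_def)
    moreover have "x \<notin> U"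
    proof -
      have "1 \<le> real n" using n1 by simp
      then have "1 < x" using s by (auto simp: x_def okK_def)
      then show ?thesis using xp m by (auto simp: U_def bset_def)
    qed
    ultimately show "\<exists>x. rho3 s' x < e' \<and> x \<notin> U" by blast
  qed
qed

lemma compat3:
  assumes s: "okK s" "okK s'"
  shows "compat (rho3 s) (rho3 s') (psi (\<lambda>_. s) (\<lambda>_. s'))"
  unfolding compat_def
proof (intro allI impI)
  fix e :: real assume e: "e > 0"
  define d where "d = min (1/40) (e/8)"
  have d: "0 < d" "d \<le> 1/40" "4 * d < e" using e by (auto simp: d_def)
  let ?\<psi> = "psi (\<lambda>_. s) (\<lambda>_. s')"
  have oks: "okseq (\<lambda>_. s)" "okseq (\<lambda>_. s')" using s by (auto intro: okK_okseq)
  have ok: "okr s" "okr s'" using s by (auto intro: okK_okr)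
  have Lb: "max (s'/s) ((1/2-s')/(1/2-s)) \<le> 2"
  proof -
    have "s'/s \<le> 2" using s by (auto simp: okK_def divide_le_eq)
    moreover have "(1/2-s')/(1/2-s) \<le> 2" using s by (auto simp: okK_def divide_le_eq)
    ultimately show ?thesis by simp
  qed
  show "\<exists>d>0. \<forall>x. rho3 s x < d \<longrightarrow> rho3 s' (?\<psi> x) < e"
  proof (intro exI[of _ d] conjI allI impI d(1))
    fix x assume "rho3 s x < d"
    then have "\<bar>x\<bar> < d \<or> (\<exists>y\<in>C3 s. \<bar>x - y\<bar> < d \<and> 1/(1+\<bar>x\<bar>) < d \<and> 1 \<le> x \<and> \<lfloor>x\<rfloor> = \<lfloor>y\<rfloor>
      \<and> blk x = blk y \<and> uoff x - uoff y = x - y \<and> \<bar>uoff x\<bar> < s + d)"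
      using rho3_small[OF s(1) _ d(2)] by blast
    then show "rho3 s' (?\<psi> x) < e"
    proof
      assume "\<bar>x\<bar> < d"
      then have "?\<psi> x = x" using d by (intro psi_small) auto
      then show ?thesis using \<open>\<bar>x\<bar> < d\<close> d by (simp add: rho3_def)
    next
      assume "\<exists>y\<in>C3 s. \<bar>x - y\<bar> < d \<and> 1/(1+\<bar>x\<bar>) < d \<and> 1 \<le> x \<and> \<lfloor>x\<rfloor> = \<lfloor>y\<rfloor>
      \<and> blk x = blk y \<and> uoff x - uoff y = x - y \<and> \<bar>uoff x\<bar> < s + d"
      then obtain y where y: "y \<in> C3 s" "\<bar>x - y\<bar> < d" "1/(1+\<bar>x\<bar>) < d" "1 \<le> x" "\<lfloor>x\<rfloor> = \<lfloor>y\<rfloor>"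
        "blk x = blk y" "uoff x - uoff y = x - y" by blast
      have y1: "1 \<le> y" using y(1) by (auto simp: C3_def shp_def)
      have pyC: "?\<psi> y \<in> C3 s'" using psi_shp[OF oks, of y 2] y(1) by (simp add: C3_def)
      have "?\<psi> x - ?\<psi> y = fpl s s' (uoff x) - fpl s s' (uoff y)"
        using y(4,5) y1 by (simp add: psi_def)
      then have "\<bar>?\<psi> x - ?\<psi> y\<bar> \<le> max (s'/s) ((1/2-s')/(1/2-s)) * \<bar>uoff x - uoff y\<bar>"
        using fpl_lip[OF ok, of "uoff x" "uoff y"] by simp
      also have "\<dots> = max (s'/s) ((1/2-s')/(1/2-s)) * \<bar>x - y\<bar>" using y(7) by simp
      also have "\<dots> \<le> 2 * \<bar>x - y\<bar>" using Lb by (intro mult_right_mono) auto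
      finally have pd0: "\<bar>?\<psi> x - ?\<psi> y\<bar> \<le> 2 * \<bar>x - y\<bar>" .
      have "2 * \<bar>x - y\<bar> \<le> 2 * d" using y(2) by simp
      with pd0 have pd: "\<bar>?\<psi> x - ?\<psi> y\<bar> \<le> 2 * d" by (rule order_trans)
      have i1: "infdist (?\<psi> x) (C3 s') \<le> 2 * d"
        using infdist_le[OF pyC, of "?\<psi> x"] pd by (simp add: dist_real_def)
      have "x - 1 < ?\<psi> x" using psi_near[OF oks, of x] by linarith
      have "0 < 1 + x" using y(4) by simp
      then have x39a: "1 < d * (1 + x)" using y(3) y(4) by (simp add: pos_divide_less_eq)
      then have x39: "1 + x > 1/d" using d(1) by (simp add: pos_divide_less_eq mult.commute)
      have "1/(1+\<bar>?\<psi> x\<bar>) \<le> 2 * d"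
      proof -
        have "1/d \<ge> 40" using d by (simp add: le_divide_eq)
        then have "(1 + x)/2 \<le> 1 + \<bar>?\<psi> x\<bar>" using \<open>x - 1 < ?\<psi> x\<close> x39 abs_ge_self[of "?\<psi> x"] by argo
        moreover have "0 < (1+x)/2" using y(4) by simp
        ultimately have "1/(1+\<bar>?\<psi> x\<bar>) \<le> 1/((1+x)/2)" by (intro divide_left_mono) auto
        also have "\<dots> = 2/(1+x)" by simp
        also have "\<dots> \<le> 2 * d" using x39a \<open>0 < 1 + x\<close> by (simp add: pos_divide_le_eq)
        finally show ?thesis .
      qed
      then have "rho3 s' (?\<psi> x) \<le> 4 * d" using i1 unfolding rho3_def by linarith
      then show ?thesis using d by linarith
    qed
  qed
qed

lemma K3_homeo:
  assumes "okK s" "okK s'"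
  shows "TR (rho3 s) homeomorphic_space TR (rho3 s')"
  using TR_homeo[OF psi_smono[OF okK_okseq okK_okseq] psi_smono[OF okK_okseq okK_okseq]
      psi_inv[OF okK_okseq okK_okseq] psi_inv[OF okK_okseq okK_okseq] psi_zero
      compat3[OF assms] compat3[OF assms(2,1)]] assms by blast

lemma TS_le_K3:
  assumes s: "okK s" and S: "S \<subseteq> {x. 1 \<le> x}" and sup: "\<And>x. 1 \<le> x \<Longrightarrow> \<bar>uoff x\<bar> < 1/5 \<Longrightarrow> x \<in> S"
  shows "top_le (TR (rhoS S)) (TR (rho3 s))"
proof (rule TR_le)
  fix e :: real assume e: "e > 0"
  define d where "d = min (1/40) (e/2)"
  have d: "0 < d" "d \<le> 1/40" "2 * d \<le> e" using e by (auto simp: d_def)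
  show "\<exists>d>0. \<forall>x. rho3 s x < d \<longrightarrow> rhoS S x < e"
  proof (intro exI[of _ d] conjI allI impI d(1))
    fix x assume "rho3 s x < d"
    then have "\<bar>x\<bar> < d \<or> (\<exists>y\<in>C3 s. \<bar>x - y\<bar> < d \<and> 1/(1+\<bar>x\<bar>) < d \<and> 1 \<le> x \<and> \<lfloor>x\<rfloor> = \<lfloor>y\<rfloor>
      \<and> blk x = blk y \<and> uoff x - uoff y = x - y \<and> \<bar>uoff x\<bar> < s + d)"
      using rho3_small[OF s _ d(2)] by blast
    then show "rhoS S x < e"
    proof
      assume "\<bar>x\<bar> < d"
      then have "x \<notin> S" using S d by auto
      then show ?thesis using \<open>\<bar>x\<bar> < d\<close> d by (simp add: rhoS_def)
    next
      assume "\<exists>y\<in>C3 s. \<bar>x - y\<bar> < d \<and> 1/(1+\<bar>x\<bar>) < d \<and> 1 \<le> x \<and> \<lfloor>x\<rfloor> = \<lfloor>y\<rfloor>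
      \<and> blk x = blk y \<and> uoff x - uoff y = x - y \<and> \<bar>uoff x\<bar> < s + d"
      then have x: "1 \<le> x" "\<bar>uoff x\<bar> < s + d" "1/(1+x) < d" by auto
      then have "x \<in> S" using s d by (intro sup) (auto simp: okK_def)
      moreover have "1/x \<le> 2/(1+x)" using x(1) by (simp add: field_simps)
      moreover have "2/(1+x) < 2 * d" using x(3) by simp
      ultimately show ?thesis using d by (simp add: rhoS_def)
    qed
  qed
qed



lemma aff_lemmas: fixes a b :: real
  shows "a < b \<Longrightarrow> (1 + a)/2 < (1+b)/2" "-1 < a \<Longrightarrow> 0 < (1+a)/2" "a < 1 \<Longrightarrow> (1+a)/2 < 1"
  by auto

definition sg :: "real \<Rightarrow> real" where "sg x = (1 + x/(1+\<bar>x\<bar>))/2"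

lemma sg_bounds: "0 < sg x" "sg x < 1"
proof -
  have "\<bar>x/(1+\<bar>x\<bar>)\<bar> = \<bar>x\<bar>/(1+\<bar>x\<bar>)" by simp
  also have "\<dots> < 1" by (simp add: divide_less_eq)
  finally have "\<bar>x/(1+\<bar>x\<bar>)\<bar> < 1" .
  then have "-1 < x/(1+\<bar>x\<bar>)" "x/(1+\<bar>x\<bar>) < 1" unfolding abs_less_iff by linarith+
  then show "0 < sg x" "sg x < 1" unfolding sg_def by (auto intro: aff_lemmas)
qed

lemma sg_mono: assumes "x < y" shows "sg x < sg y"
proof -
  have p: "0 < 1+\<bar>x\<bar>" "0 < 1+\<bar>y\<bar>" by auto
  have "x * (1+\<bar>y\<bar>) < y * (1+\<bar>x\<bar>)"
    using assms mult_nonpos_nonneg[of x y] by (cases "0 \<le> x"; cases "0 \<le> y") (auto simp: algebra_simps mult_strict_right_mono)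
  then have "x/(1+\<bar>x\<bar>) < y/(1+\<bar>y\<bar>)" using p by (simp add: divide_less_eq less_divide_eq mult.commute)
  then show ?thesis unfolding sg_def by (rule aff_lemmas)
qed



definition wn :: "nat \<Rightarrow> real" where "wn n = 1/(20*(real n+1))"
definition rad :: "real \<Rightarrow> real \<Rightarrow> nat \<Rightarrow> real" where
  "rad x u n = 1/5 + sg x / 10 + sg u * wn n"

lemma wn_bounds: "0 < wn n" "wn n \<le> 1/20"
  by (auto simp: wn_def divide_le_eq)

lemma rad_bounds: "1/5 < rad x u n" "rad x u n \<le> 2/5"
proof -
  define a where "a = sg x"
  define b where "b = sg u"
  define w where "w = wn n"
  have ab: "0 < a" "a < 1" "0 < b" "b < 1" using sg_bounds by (auto simp: a_def b_def)
  have w: "0 < w" "w \<le> 1/20" using wn_bounds by (auto simp: w_def)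
  have bw: "0 < b * w" "b * w \<le> 1/20" using ab w mult_mono[of b 1 w "1/20"] by auto
  have e: "rad x u n = 1/5 + a/10 + b * w" by (simp add: rad_def a_def b_def w_def)
  show "1/5 < rad x u n" "rad x u n \<le> 2/5" unfolding e using ab bw by linarith+
qed

lemma rad_pos: "0 < rad x u n" using rad_bounds(1)[of x u n] by linarith

lemma goodr_rad: "goodr (rad x u)"
proof -
  have "0 < rad x u n \<and> rad x u n < 1/2 \<and> rad x u n \<le> 2/5" for n
    using rad_bounds[of x u n] by linarith
  then show ?thesis by (auto simp: goodr_def okseq_def okr_def)
qed

definition lexlt :: "real \<times> real \<Rightarrow> real \<times> real \<Rightarrow> bool" where
  "lexlt p q \<longleftrightarrow> fst p < fst q \<or> (fst p = fst q \<and> snd p < snd q)"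

lemma lex_trich: "p \<noteq> q \<Longrightarrow> lexlt p q \<or> lexlt q p"
  by (cases p; cases q) (auto simp: lexlt_def)

lemma lex_irrefl: "lexlt p q \<Longrightarrow> p \<noteq> q" by (auto simp: lexlt_def)

lemma rad_lt:
  assumes "lexlt p q"
  shows "\<exists>M::nat. \<forall>n>M. rad (fst p) (snd p) n < rad (fst q) (snd q) n"
proof (cases "fst p < fst q")
  case True
  define \<delta> where "\<delta> = sg (fst q) - sg (fst p)"
  have \<delta>: "0 < \<delta>" using sg_mono[OF True] by (simp add: \<delta>_def)
  obtain M :: nat where M: "1/\<delta> < real M" using reals_Archimedean2 by blast
  have "rad (fst p) (snd p) n < rad (fst q) (snd q) n" if n: "M < n" for n
  proof -
    define w where "w = wn n"
    have w: "0 < w" using wn_bounds by (simp add: w_def)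
    have "1/\<delta> < real n + 1" using M n by linarith
    then have "1 < (real n + 1) * \<delta>" using \<delta> by (simp add: pos_divide_less_eq)
    then have w20: "20 * w < \<delta>" unfolding w_def wn_def by (simp add: field_simps)
    define a where "a = sg (snd p)"
    define b where "b = sg (snd q)"
    have ab: "0 < a" "a < 1" "0 < b" "b < 1" using sg_bounds by (auto simp: a_def b_def)
    have "a * w < 1 * w" using ab w by (intro mult_strict_right_mono) auto
    then have aw: "a * w < w" by simp
    moreover have "0 < b * w" using ab w by simp
    moreover have "rad (fst q) (snd q) n - rad (fst p) (snd p) n = \<delta>/10 + b * w - a * w"
      by (simp add: rad_def \<delta>_def a_def b_def w_def)
    ultimately show ?thesis using w20 aw w by argo
  qed
  then show ?thesis by blast
next
  case False
  then have e: "fst p = fst q" "snd p < snd q" using assms by (auto simp: lexlt_def)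
  have "sg (snd p) * wn n < sg (snd q) * wn n" for n
    using sg_mono[OF e(2)] wn_bounds(1) by (intro mult_strict_right_mono) auto
  then show ?thesis using e by (auto simp: rad_def)
qed

lemma TS_not_le:
  assumes S1: "S1 \<subseteq> {x. 1 \<le> x \<and> \<bar>uoff x\<bar> \<le> r (blk x)}" and S2: "S2 \<subseteq> {x. 1 \<le> x}"
    and S2': "\<And>x. 1 \<le> x \<Longrightarrow> \<bar>uoff x\<bar> < r' (blk x) \<Longrightarrow> x \<in> S2"
    and M: "\<And>n. M < n \<Longrightarrow> r n < r' n" and r': "\<And>n. 0 < r n \<and> r' n \<le> 2/5"
  shows "\<not> top_le (TR (rhoS S1)) (TR (rhoS S2))"
proof -
  define mm where "mm n = (if M < n then (r n + r' n)/2 else 0)" for n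
  define U where "U = ball 0 1 \<union> bset (\<lambda>n. - mm n) mm"
  have mm: "0 \<le> mm n" "mm n \<le> 2/5" for n using r'[of n] M[of n] by (auto simp: mm_def)
  show ?thesis
  proof (rule TR_not_le[of U "1/(real M + 2)"])
    show "open U" unfolding U_def
    proof (intro open_Un open_bset open_ball)
      fix n show "-1/2 < - mm n" "mm n \<le> 1/2" using mm[of n] by auto
    qed
    show "0 \<in> U" by (simp add: U_def)
    show "0 < 1/(real M + 2)" by simp
  next
    fix x assume x: "rhoS S1 x < 1/(real M + 2)"
    show "x \<in> U"
    proof (cases "x \<in> S1")
      case True
      then have x1: "1 \<le> x" "\<bar>uoff x\<bar> \<le> r (blk x)" using S1 by auto
      have "1/x < 1/(real M + 2)" using x True by (simp add: rhoS_def)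
      then have "real M + 2 < x" using x1 by (simp add: frac_less2 divide_less_eq)
      then have "M < blk x" unfolding blk_def by linarith
      then have "\<bar>uoff x\<bar> < mm (blk x)" using x1 M[of "blk x"] by (auto simp: mm_def)
      then show ?thesis using x1 by (auto simp: U_def bset_def)
    next
      case False
      then have "\<bar>x\<bar> < 1" using x by (simp add: rhoS_def) (smt (verit) divide_le_eq_1 of_nat_0_le_iff)
      then show ?thesis by (auto simp: U_def)
    qed
  next
    fix e :: real assume e: "e > 0"
    obtain n :: nat where n: "max (real M) (1/e) < real n" using reals_Archimedean2 by blast
    have nM: "M < n" using n by auto
    have rr: "0 < r n" "r n < r' n" "r' n \<le> 2/5" using r'[of n] M[OF nM] by auto
    define v where "v = (mm n + r' n)/2"
    have mmn: "mm n = (r n + r' n)/2" using nM by (simp add: mm_def)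
    have v1: "mm n < v" using rr unfolding v_def mmn by argo
    have v2: "v < r' n" using rr unfolding v_def mmn by argo
    have v3: "v < 1/2" using rr unfolding v_def mmn by argo
    have v4: "0 < v" using rr unfolding v_def mmn by argo
    note v = v1 v2 v3 v4
    define x where "x = real n + 1/2 + v"
    have xp: "blk x = n" "uoff x = v" using pt_props[of v n] v by (auto simp: x_def)
    have "0 < 1/e" using e by simp
    then have x1: "1 \<le> x" "1/e < x" using n v by (auto simp: x_def)
    have xS: "x \<in> S2" using S2'[OF x1(1)] xp v by auto
    have "1/x < e" using x1 e by (simp add: pos_divide_less_eq mult.commute)
    then have "rhoS S2 x < e" using xS by (simp add: rhoS_def)
    moreover have "x \<notin> U" using xp v x1 by (auto simp: U_def bset_def)
    ultimately show "\<exists>x. rhoS S2 x < e \<and> x \<notin> U" by blast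
  qed
qed

definition Tp :: "nat \<Rightarrow> real \<times> real \<Rightarrow> real topology" where
  "Tp i p = TR (rhoS (shp i (rad (fst p) (snd p))))"

lemma Tp_cmp:
  assumes "lexlt p q"
  shows "top_le (Tp j q) (Tp i p)" "\<not> top_le (Tp i p) (Tp j q)"
proof -
  obtain M :: nat where M: "\<And>n. M < n \<Longrightarrow> rad (fst p) (snd p) n < rad (fst q) (snd q) n"
    using rad_lt[OF assms] by blast
  show "top_le (Tp j q) (Tp i p)" unfolding Tp_def
  proof (rule TS_le[OF shp_ge1 shp_ge1, where M = "real M + 1"])
    fix x assume x: "x \<in> shp i (rad (fst p) (snd p))" "real M + 1 < x"
    then have "M < blk x" unfolding blk_def by linarith
    then have "\<bar>uoff x\<bar> < rad (fst q) (snd q) (blk x)" using x(1) shp_sub M by fastforce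
    then show "x \<in> shp j (rad (fst q) (snd q))" using x shp_sup by fastforce
  qed
  show "\<not> top_le (Tp i p) (Tp j q)" unfolding Tp_def
  proof (rule TS_not_le[OF shp_sub shp_ge1, where M = M])
    fix x show "1 \<le> x \<Longrightarrow> \<bar>uoff x\<bar> < rad (fst q) (snd q) (blk x) \<Longrightarrow> x \<in> shp j (rad (fst q) (snd q))"
      using shp_sup by fastforce
  qed (use M rad_pos rad_bounds in auto)
qed



definition cirr :: real where "cirr = (SOME c::real. c \<notin> \<rat>)"

lemma cirr: "cirr \<notin> \<rat>"
proof -
  have "\<exists>c::real. c \<notin> \<rat>"
  proof (rule ccontr)
    assume "\<not> (\<exists>c::real. c \<notin> \<rat>)"
    then have "(UNIV::real set) = \<rat>" by auto
    then show False using uncountable_UNIV_real countable_rat by metis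
  qed
  then show ?thesis unfolding cirr_def by (rule someI_ex)
qed

definition Q :: "nat \<Rightarrow> real set" where "Q i = (\<lambda>q. q + real i * cirr) ` \<rat>"

lemma Q_disj: assumes "u \<in> Q i" "u \<in> Q j" shows "i = j"
proof (rule ccontr)
  assume ij: "i \<noteq> j"
  obtain q q' where q: "q \<in> \<rat>" "q' \<in> \<rat>" "u = q + real i * cirr" "u = q' + real j * cirr"
    using assms by (auto simp: Q_def)
  then have "(real i - real j) * cirr = q' - q" by (simp add: algebra_simps)
  moreover have "real i - real j \<noteq> 0" using ij by simp
  ultimately have "cirr = (q' - q) / (real i - real j)" by (simp add: field_simps)
  moreover have "(q' - q) / (real i - real j) \<in> \<rat>" using q by (intro Rats_divide Rats_diff) auto
  ultimately show False using cirr by simp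
qed

lemma Q_dense: assumes "a < b" shows "\<exists>u\<in>Q i. a < u \<and> u < b"
proof -
  obtain q where q: "q \<in> \<rat>" "a - real i * cirr < q" "q < b - real i * cirr"
    using Rats_dense_in_real[of "a - real i * cirr" "b - real i * cirr"] assms by auto
  then show ?thesis by (intro bexI[of _ "q + real i * cirr"]) (auto simp: Q_def)
qed

lemma Q_countable: "countable (Q i)" by (simp add: Q_def countable_rat)
lemma Q_mem: "real i * cirr \<in> Q i" unfolding Q_def by (rule image_eqI[of _ _ 0]) auto

definition Kf :: "nat \<Rightarrow> real topology set" where "Kf i = Tp i ` ((UNIV::real set) \<times> Q i)"

definition rs :: "real \<Rightarrow> real" where "rs t = 1/100 + sg t / 100"
definition K3f :: "real topology set" where "K3f = (\<lambda>t. TR (rho3 (rs t))) ` UNIV"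

lemma rs_ok: "okK (rs t)" using sg_bounds[of t] by (auto simp: rs_def okK_def)
lemma rs_mono: "t < t' \<Longrightarrow> rs t < rs t'" using sg_mono by (auto simp: rs_def)

lemma top_le_refl: "top_le X X" by (simp add: top_le_def)

lemma Tp_inj: "Tp i p = Tp i q \<Longrightarrow> p = q"
  using lex_trich Tp_cmp(2) top_le_refl by metis

lemma pair_chain:
  assumes "p \<in> (UNIV::real set) \<times> Q i" "q \<in> (UNIV::real set) \<times> Q j"
  shows "top_le (Tp i p) (Tp j q) \<or> top_le (Tp j q) (Tp i p)"
proof (cases "p = q")
  case True
  have "snd p \<in> Q i" "snd q \<in> Q j" using assms by auto
  then show ?thesis using Q_disj[of "snd p" i j] True top_le_refl by auto
next
  case False
  then show ?thesis using lex_trich Tp_cmp(1) by metis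
qed

lemma union_chain: "top_chain (Kf 0 \<union> Kf 1 \<union> Kf 2)"
  unfolding top_chain_def Kf_def using pair_chain by blast

lemma sub_chain: "top_chain K \<Longrightarrow> K' \<subseteq> K \<Longrightarrow> top_chain K'"
  unfolding top_chain_def by blast

lemma dense_k: "top_dense_in (Kf k) (Kf 0 \<union> Kf 1 \<union> Kf 2)"
  unfolding top_dense_in_def
proof (intro ballI impI)
  fix X Y assume XY: "X \<in> Kf 0 \<union> Kf 1 \<union> Kf 2" "Y \<in> Kf 0 \<union> Kf 1 \<union> Kf 2" and le: "top_le X Y \<and> X \<noteq> Y"
  obtain i p where ip: "X = Tp i p" "p \<in> (UNIV::real set) \<times> Q i" using XY(1) by (auto simp: Kf_def)
  obtain j q where jq: "Y = Tp j q" "q \<in> (UNIV::real set) \<times> Q j" using XY(2) by (auto simp: Kf_def)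
  have "p \<noteq> q"
  proof
    assume "p = q"
    have "snd p \<in> Q i" "snd q \<in> Q j" using ip jq by auto
    then have "i = j" using Q_disj[of "snd p" i j] \<open>p = q\<close> by simp
    then show False using le ip jq \<open>p = q\<close> by simp
  qed
  moreover have "\<not> lexlt p q" using Tp_cmp(2) le ip jq by blast
  ultimately have qp: "lexlt q p" using lex_trich by blast
  obtain r where r: "r \<in> (UNIV::real set) \<times> Q k" "lexlt q r" "lexlt r p"
  proof (cases "fst q < fst p")
    case True
    show ?thesis
      by (rule that[of "((fst q + fst p)/2, real k * cirr)"]) (use True Q_mem in \<open>auto simp: lexlt_def\<close>)
  next
    case False
    then have e: "fst q = fst p" "snd q < snd p" using qp by (auto simp: lexlt_def)
    obtain u where "u \<in> Q k" "snd q < u" "u < snd p" using Q_dense[OF e(2)] by blast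
    then show ?thesis by (intro that[of "(fst p, u)"]) (use e in \<open>auto simp: lexlt_def\<close>)
  qed
  define Z where "Z = Tp k r"
  have Z: "Z \<in> Kf k" using r by (auto simp: Z_def Kf_def)
  have "top_le X Z" "\<not> top_le Z X" using Tp_cmp[OF r(3)] ip by (auto simp: Z_def)
  moreover have "top_le Z Y" "\<not> top_le Y Z" using Tp_cmp[OF r(2)] jq by (auto simp: Z_def)
  ultimately show "\<exists>Z\<in>Kf k - {X, Y}. top_le X Z \<and> top_le Z Y"
    using Z top_le_refl by (intro bexI[of _ Z]) auto
qed

lemma Q_eqpoll: "(UNIV::real set) \<times> Q i \<approx> (UNIV :: real set)"
proof (rule lepoll_antisym)
  define f where "f p = sg (fst p) + real (to_nat_on (Q i) (snd p))" for p
  have fl: "\<lfloor>sg x + real n\<rfloor> = int n" for x n using sg_bounds[of x] by (intro floor_unique) auto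
  have "inj_on f ((UNIV::real set) \<times> Q i)"
  proof (rule inj_onI)
    fix p q assume pq: "p \<in> (UNIV::real set) \<times> Q i" "q \<in> (UNIV::real set) \<times> Q i" "f p = f q"
    then have "to_nat_on (Q i) (snd p) = to_nat_on (Q i) (snd q)" using fl by (metis f_def of_nat_eq_iff of_int_of_nat_eq)
    moreover have "snd p \<in> Q i" "snd q \<in> Q i" using pq by auto
    ultimately have s: "snd p = snd q" by (rule inj_onD[OF inj_on_to_nat_on[OF Q_countable[of i]]])
    then have "sg (fst p) = sg (fst q)" using pq by (simp add: f_def)
    then have "fst p = fst q" using sg_mono by (metis less_irrefl linorder_neqE_linordered_idom)
    then show "p = q" using s by (simp add: prod_eq_iff)
  qed
  then show "(UNIV::real set) \<times> Q i \<lesssim> (UNIV :: real set)" unfolding lepoll_def by (intro exI[where x = f]) auto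
  have "inj_on (\<lambda>x. (x, real i * cirr)) (UNIV :: real set)" by (auto simp: inj_on_def)
  moreover have "(\<lambda>x. (x, real i * cirr)) ` UNIV \<subseteq> (UNIV::real set) \<times> Q i" using Q_mem by auto
  ultimately show "(UNIV :: real set) \<lesssim> (UNIV::real set) \<times> Q i" unfolding lepoll_def by (intro exI[where x = "\<lambda>x. (x, real i * cirr)"]) auto
qed

lemma Kf_eqpoll: "Kf i \<approx> (UNIV :: real set)"
proof -
  have "inj_on (Tp i) ((UNIV::real set) \<times> Q i)" using Tp_inj by (auto simp: inj_on_def)
  then have "bij_betw (Tp i) ((UNIV::real set) \<times> Q i) (Kf i)" unfolding Kf_def by (rule inj_on_imp_bij_betw)
  then have "(UNIV::real set) \<times> Q i \<approx> Kf i" unfolding eqpoll_def by (intro exI[where x = "Tp i"])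
  then have "Kf i \<approx> (UNIV::real set) \<times> Q i" by (rule eqpoll_sym)
  then show ?thesis using Q_eqpoll by (rule eqpoll_trans)
qed

lemma K3_inj: "inj (\<lambda>t. TR (rho3 (rs t)))"
proof (rule injI)
  fix t t' assume eq: "TR (rho3 (rs t)) = TR (rho3 (rs t'))"
  show "t = t'"
  proof (rule ccontr)
    assume "t \<noteq> t'"
    then consider "t < t'" | "t' < t" by linarith
    then show False
    proof cases
      case 1 then show False using K3_not_le[OF rs_ok rs_ok rs_mono[OF 1]] eq top_le_refl by metis
    next
      case 2 then show False using K3_not_le[OF rs_ok rs_ok rs_mono[OF 2]] eq top_le_refl by metis
    qed
  qed
qed

lemma K3f_eqpoll: "K3f \<approx> (UNIV :: real set)"
proof -
  have "bij_betw (\<lambda>t. TR (rho3 (rs t))) UNIV K3f" unfolding K3f_def using K3_inj by (rule inj_on_imp_bij_betw)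
  then have "(UNIV :: real set) \<approx> K3f" unfolding eqpoll_def by (intro exI[where x = "\<lambda>t. TR (rho3 (rs t))"])
  then show ?thesis by (rule eqpoll_sym)
qed

lemma K3_pair: "top_le (TR (rho3 (rs t))) (TR (rho3 (rs t'))) \<or> top_le (TR (rho3 (rs t'))) (TR (rho3 (rs t)))"
proof (cases "t \<le> t'")
  case True
  then have "rs t \<le> rs t'" using rs_mono by (cases "t = t'") (auto simp: less_imp_le)
  then show ?thesis using K3_le[OF rs_ok rs_ok] by blast
next
  case False
  then have "rs t' \<le> rs t" using rs_mono by (auto simp: less_imp_le)
  then show ?thesis using K3_le[OF rs_ok rs_ok] by blast
qed

lemma K3f_chain: "top_chain K3f"
  unfolding top_chain_def K3f_def using K3_pair by (auto simp del: )

lemma Tp_L0: "Tp i p \<in> L0_family" unfolding Tp_def by (rule TR_L0[OF lowb_rhoS[OF shp_ge1]])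
lemma K3_L0: "TR (rho3 (rs t)) \<in> L0_family" by (rule TR_L0[OF goodrho_lowb[OF rho3_good[OF rs_ok]]])

lemma Tp_homeo: "Tp i p homeomorphic_space Tp i q"
  unfolding Tp_def
  by (rule TS_homeo[OF goodr_props(4)[OF goodr_rad] goodr_props(4)[OF goodr_rad] shp_ge1 shp_ge1])
    (rule psi_shp[OF goodr_props(4)[OF goodr_rad] goodr_props(4)[OF goodr_rad]])

lemma Tp_le_K3: "top_le (Tp i p) (TR (rho3 s))" if "okK s"
  unfolding Tp_def
proof (rule TS_le_K3[OF that shp_ge1])
  fix x :: real assume "1 \<le> x" "\<bar>uoff x\<bar> < 1/5"
  then show "x \<in> shp i (rad (fst p) (snd p))"
    using rad_bounds(1)[of "fst p" "snd p" "blk x"] by (intro subsetD[OF shp_sup]) auto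
qed

lemma Kf_props: "Kf i \<subseteq> L0_family \<and> top_chain (Kf i) \<and> Kf i \<approx> (UNIV :: real set) \<and>
    (\<forall>\<tau>\<in>Kf i. \<forall>\<sigma>\<in>Kf i. \<tau> homeomorphic_space \<sigma>)"
proof (intro conjI)
  show "Kf i \<subseteq> L0_family" using Tp_L0 by (auto simp: Kf_def)
  show "top_chain (Kf i)" unfolding top_chain_def Kf_def using pair_chain by blast
  show "Kf i \<approx> (UNIV :: real set)" by (rule Kf_eqpoll)
  show "\<forall>\<tau>\<in>Kf i. \<forall>\<sigma>\<in>Kf i. \<tau> homeomorphic_space \<sigma>" using Tp_homeo by (auto simp: Kf_def)
qed

lemma K3f_props: "K3f \<subseteq> L0_family \<and> top_chain K3f \<and> K3f \<approx> (UNIV :: real set) \<and>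
    (\<forall>\<tau>\<in>K3f. \<forall>\<sigma>\<in>K3f. \<tau> homeomorphic_space \<sigma>)"
  using K3_L0 K3f_chain K3f_eqpoll K3_homeo[OF rs_ok rs_ok] by (auto simp: K3f_def)

theorem theorem7:
  shows "\<exists>K0 K1 K2 K3 :: real topology set.
    (\<forall>K \<in> {K0, K1, K2, K3}.
        K \<subseteq> L0_family \<and> top_chain K \<and> K \<approx> (UNIV :: real set) \<and>
        (\<forall>\<tau>\<in>K. \<forall>\<sigma>\<in>K. \<tau> homeomorphic_space \<sigma>)) \<and>
    (\<forall>\<tau>\<in>K0. second_countable \<tau> \<and> \<not> regular_space \<tau>) \<and>
    (\<forall>\<tau>\<in>K1. \<not> regular_space \<tau> \<and> \<not> first_countable \<tau>) \<and>
    (\<forall>\<tau>\<in>K2. hereditarily normal_space \<tau> \<and> \<not> first_countable \<tau>) \<and>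
    (\<forall>\<tau>\<in>K3. completely_metrizable_space \<tau>) \<and>
    top_chain (K0 \<union> K1 \<union> K2) \<and>
    (\<forall>K \<in> {K0, K1, K2}. top_dense_in K (K0 \<union> K1 \<union> K2)) \<and>
    (\<forall>\<tau>\<in>K0 \<union> K1 \<union> K2. \<forall>\<sigma>\<in>K3. top_le \<tau> \<sigma>)"
proof (rule exI[of _ "Kf 0"], rule exI[of _ "Kf 1"], rule exI[of _ "Kf 2"], rule exI[of _ K3f], intro conjI)
  show "\<forall>K \<in> {Kf 0, Kf 1, Kf 2, K3f}. K \<subseteq> L0_family \<and> top_chain K \<and> K \<approx> (UNIV :: real set) \<and>
        (\<forall>\<tau>\<in>K. \<forall>\<sigma>\<in>K. \<tau> homeomorphic_space \<sigma>)"
    using Kf_props K3f_props by blast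
  show "\<forall>\<tau>\<in>Kf 0. second_countable \<tau> \<and> \<not> regular_space \<tau>"
    unfolding Kf_def Tp_def
    using goodr_props(4)[OF goodr_rad] not_regular_shp[OF goodr_rad]
    by (auto intro!: TS_second_countable shp_ge1 open_shp0)
  show "\<forall>\<tau>\<in>Kf 1. \<not> regular_space \<tau> \<and> \<not> first_countable \<tau>"
    unfolding Kf_def Tp_def using not_regular_shp[OF goodr_rad] not_first_countable_shp[OF goodr_rad] by auto
  show "\<forall>\<tau>\<in>Kf 2. hereditarily normal_space \<tau> \<and> \<not> first_countable \<tau>"
    unfolding Kf_def Tp_def using hn_shp2[OF goodr_rad] not_first_countable_shp[OF goodr_rad] by auto
  show "\<forall>\<tau>\<in>K3f. completely_metrizable_space \<tau>"
    unfolding K3f_def using TR_completely_metrizable[OF rho3_good[OF rs_ok]] by auto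
  show "top_chain (Kf 0 \<union> Kf 1 \<union> Kf 2)" by (rule union_chain)
  show "\<forall>K \<in> {Kf 0, Kf 1, Kf 2}. top_dense_in K (Kf 0 \<union> Kf 1 \<union> Kf 2)" using dense_k by auto
  show "\<forall>\<tau>\<in>Kf 0 \<union> Kf 1 \<union> Kf 2. \<forall>\<sigma>\<in>K3f. top_le \<tau> \<sigma>"
    unfolding Kf_def K3f_def using Tp_le_K3[OF rs_ok] by auto
qed

end
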